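(* Let $\mathbb{C}$ be a pointed protomodular category in which centralizers of Bourn-normal monomorphisms exist and are Bourn-normal monomorphisms. Suppose $A$ is an abelian and complete${}^*$ object of $\mathbb{C}$ and $B$ is a strong-complete object of $\mathbb{C}$. If $\hom(B,A)=\{0\}$, then $B\times A$ is complete${}^*$.
   Context: A pointed category with finite limits is protomodular if the split short five lemma holds. Morphisms $f:A'\to X$, $g:B'\to X$ commute if some $\varphi:A'\times B'\to X$ has $\varphi\langle1,0\rangle=f$, $\varphi\langle0,1\rangle=g$; the centralizer $z_f:Z_X(A',f)\to X$ of $f$ is the terminal object among morphisms into $X$ commuting with $f$. An object $A$ is abelian if $1_A$ commutes with $1_A$. A protosplit monomorphism is a kernel of a split epimorphism; a monomorphism $m:S\to Y$ is Bourn-normal if there is an equivalence relation $(R,r_1,r_2)$ on $Y$ and $\tilde m:S\times S\to R$ with $r_1\tilde m=m\pi_1$, $r_2\tilde m=m\pi_2$ and the square $r_1\tilde m=m\pi_1$ a pullback. An object $X$ is complete${}^*$ if every Bourn-normal monomorphism with domain $X$ is a split monomorphism, and strong-complete if every protosplit monomorphism with domain $X$ is a split monomorphism with a unique retraction. *)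

theory Defs
  imports Main
begin

text \<open>A (possibly large) category presented by its object set, arrow set,
domain, codomain, identities and composition; Cmp C g f is g after f.\<close>

record ('o, 'm) cat =
  Ob  :: "'o set"
  Ar  :: "'m set"
  Dom :: "'m \<Rightarrow> 'o"
  Cod :: "'m \<Rightarrow> 'o"
  Idm :: "'o \<Rightarrow> 'm"
  Cmp :: "'m \<Rightarrow> 'm \<Rightarrow> 'm"

definition hom :: "('o, 'm) cat \<Rightarrow> 'o \<Rightarrow> 'o \<Rightarrow> 'm set" where
  "hom C X Y = {f \<in> Ar C. Dom C f = X \<and> Cod C f = Y}"

definition category :: "('o, 'm) cat \<Rightarrow> bool" where
  "category C \<longleftrightarrow>
     (\<forall>f \<in> Ar C. Dom C f \<in> Ob C \<and> Cod C f \<in> Ob C) \<and>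
     (\<forall>X \<in> Ob C. Idm C X \<in> hom C X X) \<and>
     (\<forall>X \<in> Ob C. \<forall>Y \<in> Ob C. \<forall>Z \<in> Ob C. \<forall>f \<in> hom C X Y. \<forall>g \<in> hom C Y Z.
        Cmp C g f \<in> hom C X Z) \<and>
     (\<forall>X \<in> Ob C. \<forall>Y \<in> Ob C. \<forall>f \<in> hom C X Y.
        Cmp C (Idm C Y) f = f \<and> Cmp C f (Idm C X) = f) \<and>
     (\<forall>W \<in> Ob C. \<forall>X \<in> Ob C. \<forall>Y \<in> Ob C. \<forall>Z \<in> Ob C.
        \<forall>f \<in> hom C W X. \<forall>g \<in> hom C X Y. \<forall>h \<in> hom C Y Z.
        Cmp C h (Cmp C g f) = Cmp C (Cmp C h g) f)"

definition is_terminal :: "('o, 'm) cat \<Rightarrow> 'o \<Rightarrow> bool" where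
  "is_terminal C T \<longleftrightarrow> T \<in> Ob C \<and> (\<forall>X \<in> Ob C. \<exists>!f. f \<in> hom C X T)"

definition is_initial :: "('o, 'm) cat \<Rightarrow> 'o \<Rightarrow> bool" where
  "is_initial C I \<longleftrightarrow> I \<in> Ob C \<and> (\<forall>X \<in> Ob C. \<exists>!f. f \<in> hom C I X)"

definition is_zero_obj :: "('o, 'm) cat \<Rightarrow> 'o \<Rightarrow> bool" where
  "is_zero_obj C Z \<longleftrightarrow> is_initial C Z \<and> is_terminal C Z"

definition pointed :: "('o, 'm) cat \<Rightarrow> bool" where
  "pointed C \<longleftrightarrow> category C \<and> (\<exists>Z. is_zero_obj C Z)"

definition zero_mor :: "('o, 'm) cat \<Rightarrow> 'o \<Rightarrow> 'o \<Rightarrow> 'm" where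
  "zero_mor C X Y = (THE f. f \<in> hom C X Y \<and>
      (\<exists>Z. is_zero_obj C Z \<and> (\<exists>a \<in> hom C X Z. \<exists>b \<in> hom C Z Y. f = Cmp C b a)))"

definition is_pullback :: "('o, 'm) cat \<Rightarrow> 'm \<Rightarrow> 'm \<Rightarrow> 'm \<Rightarrow> 'm \<Rightarrow> bool" where
  "is_pullback C f g p q \<longleftrightarrow>
     f \<in> Ar C \<and> g \<in> Ar C \<and> p \<in> Ar C \<and> q \<in> Ar C \<and>
     Cod C f = Cod C g \<and> Dom C p = Dom C q \<and>
     Cod C p = Dom C f \<and> Cod C q = Dom C g \<and> Cmp C f p = Cmp C g q \<and>
     (\<forall>W \<in> Ob C. \<forall>a \<in> hom C W (Dom C f). \<forall>b \<in> hom C W (Dom C g).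
        Cmp C f a = Cmp C g b \<longrightarrow>
        (\<exists>!h. h \<in> hom C W (Dom C p) \<and> Cmp C p h = a \<and> Cmp C q h = b))"

definition has_finite_limits :: "('o, 'm) cat \<Rightarrow> bool" where
  "has_finite_limits C \<longleftrightarrow> (\<exists>T. is_terminal C T) \<and>
     (\<forall>f \<in> Ar C. \<forall>g \<in> Ar C. Cod C f = Cod C g \<longrightarrow> (\<exists>p q. is_pullback C f g p q))"

definition is_product :: "('o, 'm) cat \<Rightarrow> 'o \<Rightarrow> 'o \<Rightarrow> 'o \<Rightarrow> 'm \<Rightarrow> 'm \<Rightarrow> bool" where
  "is_product C A B P p1 p2 \<longleftrightarrow>
     A \<in> Ob C \<and> B \<in> Ob C \<and> P \<in> Ob C \<and> p1 \<in> hom C P A \<and> p2 \<in> hom C P B \<and>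
     (\<forall>W \<in> Ob C. \<forall>a \<in> hom C W A. \<forall>b \<in> hom C W B.
        (\<exists>!h. h \<in> hom C W P \<and> Cmp C p1 h = a \<and> Cmp C p2 h = b))"

definition is_iso :: "('o, 'm) cat \<Rightarrow> 'm \<Rightarrow> bool" where
  "is_iso C f \<longleftrightarrow> f \<in> Ar C \<and> (\<exists>g \<in> hom C (Cod C f) (Dom C f).
      Cmp C g f = Idm C (Dom C f) \<and> Cmp C f g = Idm C (Cod C f))"

definition is_mono :: "('o, 'm) cat \<Rightarrow> 'm \<Rightarrow> bool" where
  "is_mono C m \<longleftrightarrow> m \<in> Ar C \<and> (\<forall>W \<in> Ob C. \<forall>a \<in> hom C W (Dom C m).
      \<forall>b \<in> hom C W (Dom C m). Cmp C m a = Cmp C m b \<longrightarrow> a = b)"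

definition is_split_mono :: "('o, 'm) cat \<Rightarrow> 'm \<Rightarrow> bool" where
  "is_split_mono C m \<longleftrightarrow> m \<in> Ar C \<and>
     (\<exists>r \<in> hom C (Cod C m) (Dom C m). Cmp C r m = Idm C (Dom C m))"

definition is_split_epi :: "('o, 'm) cat \<Rightarrow> 'm \<Rightarrow> bool" where
  "is_split_epi C p \<longleftrightarrow> p \<in> Ar C \<and>
     (\<exists>s \<in> hom C (Cod C p) (Dom C p). Cmp C p s = Idm C (Cod C p))"

definition is_kernel :: "('o, 'm) cat \<Rightarrow> 'm \<Rightarrow> 'm \<Rightarrow> bool" where
  "is_kernel C k p \<longleftrightarrow> k \<in> Ar C \<and> p \<in> Ar C \<and> Cod C k = Dom C p \<and>
     Cmp C p k = zero_mor C (Dom C k) (Cod C p) \<and>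
     (\<forall>W \<in> Ob C. \<forall>g \<in> hom C W (Dom C p). Cmp C p g = zero_mor C W (Cod C p) \<longrightarrow>
        (\<exists>!h. h \<in> hom C W (Dom C k) \<and> Cmp C k h = g))"

definition split_short_five :: "('o, 'm) cat \<Rightarrow> bool" where
  "split_short_five C \<longleftrightarrow>
     (\<forall>k p s k' p' s' u v w.
        is_kernel C k p \<and> s \<in> hom C (Cod C p) (Dom C p) \<and> Cmp C p s = Idm C (Cod C p) \<and>
        is_kernel C k' p' \<and> s' \<in> hom C (Cod C p') (Dom C p') \<and> Cmp C p' s' = Idm C (Cod C p') \<and>
        u \<in> hom C (Dom C k) (Dom C k') \<and> v \<in> hom C (Dom C p) (Dom C p') \<and>
        w \<in> hom C (Cod C p) (Cod C p') \<and>
        Cmp C v k = Cmp C k' u \<and> Cmp C p' v = Cmp C w p \<and> Cmp C v s = Cmp C s' w \<and>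
        is_iso C u \<and> is_iso C w \<longrightarrow> is_iso C v)"

definition protomodular :: "('o, 'm) cat \<Rightarrow> bool" where
  "protomodular C \<longleftrightarrow> pointed C \<and> has_finite_limits C \<and> split_short_five C"

definition commute :: "('o, 'm) cat \<Rightarrow> 'm \<Rightarrow> 'm \<Rightarrow> bool" where
  "commute C f g \<longleftrightarrow> f \<in> Ar C \<and> g \<in> Ar C \<and> Cod C f = Cod C g \<and>
     (\<exists>P p1 p2 i1 i2 \<phi>. is_product C (Dom C f) (Dom C g) P p1 p2 \<and>
        i1 \<in> hom C (Dom C f) P \<and> Cmp C p1 i1 = Idm C (Dom C f) \<and>
        Cmp C p2 i1 = zero_mor C (Dom C f) (Dom C g) \<and>
        i2 \<in> hom C (Dom C g) P \<and> Cmp C p1 i2 = zero_mor C (Dom C g) (Dom C f) \<and>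
        Cmp C p2 i2 = Idm C (Dom C g) \<and>
        \<phi> \<in> hom C P (Cod C f) \<and> Cmp C \<phi> i1 = f \<and> Cmp C \<phi> i2 = g)"

definition is_centralizer :: "('o, 'm) cat \<Rightarrow> 'm \<Rightarrow> 'm \<Rightarrow> bool" where
  "is_centralizer C f z \<longleftrightarrow> commute C f z \<and>
     (\<forall>g \<in> Ar C. commute C f g \<longrightarrow>
        (\<exists>!h. h \<in> hom C (Dom C g) (Dom C z) \<and> Cmp C z h = g))"

definition abelian_obj :: "('o, 'm) cat \<Rightarrow> 'o \<Rightarrow> bool" where
  "abelian_obj C A \<longleftrightarrow> A \<in> Ob C \<and> commute C (Idm C A) (Idm C A)"

definition is_equiv_rel :: "('o, 'm) cat \<Rightarrow> 'o \<Rightarrow> 'o \<Rightarrow> 'm \<Rightarrow> 'm \<Rightarrow> bool" where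
  "is_equiv_rel C Y R r1 r2 \<longleftrightarrow>
     r1 \<in> hom C R Y \<and> r2 \<in> hom C R Y \<and>
     (\<forall>W \<in> Ob C. \<forall>a \<in> hom C W R. \<forall>b \<in> hom C W R.
        Cmp C r1 a = Cmp C r1 b \<and> Cmp C r2 a = Cmp C r2 b \<longrightarrow> a = b) \<and>
     (\<exists>d \<in> hom C Y R. Cmp C r1 d = Idm C Y \<and> Cmp C r2 d = Idm C Y) \<and>
     (\<exists>\<sigma> \<in> hom C R R. Cmp C r1 \<sigma> = r2 \<and> Cmp C r2 \<sigma> = r1) \<and>
     (\<forall>q1 q2. is_pullback C r2 r1 q1 q2 \<longrightarrow>
        (\<exists>\<tau> \<in> hom C (Dom C q1) R. Cmp C r1 \<tau> = Cmp C r1 q1 \<and> Cmp C r2 \<tau> = Cmp C r2 q2))"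

definition bourn_normal :: "('o, 'm) cat \<Rightarrow> 'm \<Rightarrow> bool" where
  "bourn_normal C m \<longleftrightarrow> is_mono C m \<and>
     (\<exists>R r1 r2 P \<pi>1 \<pi>2 mt. is_equiv_rel C (Cod C m) R r1 r2 \<and>
        is_product C (Dom C m) (Dom C m) P \<pi>1 \<pi>2 \<and> mt \<in> hom C P R \<and>
        Cmp C r1 mt = Cmp C m \<pi>1 \<and> Cmp C r2 mt = Cmp C m \<pi>2 \<and>
        is_pullback C r1 m mt \<pi>1)"

definition protosplit_mono :: "('o, 'm) cat \<Rightarrow> 'm \<Rightarrow> bool" where
  "protosplit_mono C m \<longleftrightarrow> (\<exists>p. is_split_epi C p \<and> is_kernel C m p)"

definition complete_star :: "('o, 'm) cat \<Rightarrow> 'o \<Rightarrow> bool" where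
  "complete_star C X \<longleftrightarrow> X \<in> Ob C \<and>
     (\<forall>m. bourn_normal C m \<and> Dom C m = X \<longrightarrow> is_split_mono C m)"

definition strong_complete :: "('o, 'm) cat \<Rightarrow> 'o \<Rightarrow> bool" where
  "strong_complete C X \<longleftrightarrow> X \<in> Ob C \<and>
     (\<forall>m. protosplit_mono C m \<and> Dom C m = X \<longrightarrow>
        (\<exists>!r. r \<in> hom C (Cod C m) X \<and> Cmp C r m = Idm C X))"

end

theory Submission
  imports Defs
begin


definition prd :: "('o, 'm) cat \<Rightarrow> 'm \<Rightarrow> 'm \<Rightarrow> 'm \<Rightarrow> 'm \<Rightarrow> 'm" where
  "prd C p1 p2 a b = (THE h. h \<in> hom C (Dom C a) (Dom C p1) \<and> Cmp C p1 h = a \<and> Cmp C p2 h = b)"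

locale pc =
  fixes C :: "('o, 'm) cat"
  assumes proto: "protomodular C"
begin

abbreviation cp (infixr "\<cdot>" 70) where "g \<cdot> f \<equiv> Cmp C g f"
abbreviation zr where "zr X Y \<equiv> zero_mor C X Y"

lemma cat: "category C"
  using proto unfolding protomodular_def pointed_def by blast

lemma in_hom[simp]: "f \<in> hom C X Y \<longleftrightarrow> f \<in> Ar C \<and> Dom C f = X \<and> Cod C f = Y"
  unfolding hom_def by blast

lemma dom_ob[simp]: "f \<in> Ar C \<Longrightarrow> Dom C f \<in> Ob C"
  using cat unfolding category_def by blast
lemma cod_ob[simp]: "f \<in> Ar C \<Longrightarrow> Cod C f \<in> Ob C"
  using cat unfolding category_def by blast

lemma id_ar[simp]: "X \<in> Ob C \<Longrightarrow> Idm C X \<in> Ar C"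
  and id_dom[simp]: "X \<in> Ob C \<Longrightarrow> Dom C (Idm C X) = X"
  and id_cod[simp]: "X \<in> Ob C \<Longrightarrow> Cod C (Idm C X) = X"
  using cat unfolding category_def hom_def by blast+

lemma cat_comp: "X \<in> Ob C \<Longrightarrow> Y \<in> Ob C \<Longrightarrow> Z \<in> Ob C \<Longrightarrow> f \<in> hom C X Y \<Longrightarrow> g \<in> hom C Y Z \<Longrightarrow>
   g \<cdot> f \<in> hom C X Z"
  using cat unfolding category_def by blast

lemma comp_ar[simp]: "f \<in> Ar C \<Longrightarrow> g \<in> Ar C \<Longrightarrow> Cod C f = Dom C g \<Longrightarrow> g \<cdot> f \<in> Ar C"
  and comp_dom[simp]: "f \<in> Ar C \<Longrightarrow> g \<in> Ar C \<Longrightarrow> Cod C f = Dom C g \<Longrightarrow> Dom C (g \<cdot> f) = Dom C f"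
  and comp_cod[simp]: "f \<in> Ar C \<Longrightarrow> g \<in> Ar C \<Longrightarrow> Cod C f = Dom C g \<Longrightarrow> Cod C (g \<cdot> f) = Cod C g"
  using cat_comp[of "Dom C f" "Cod C f" "Cod C g" f g] by (simp_all add: hom_def)

lemma cat_id: "X \<in> Ob C \<Longrightarrow> Y \<in> Ob C \<Longrightarrow> f \<in> hom C X Y \<Longrightarrow> Idm C Y \<cdot> f = f \<and> f \<cdot> Idm C X = f"
  using cat unfolding category_def by blast

lemma id_left[simp]: "f \<in> Ar C \<Longrightarrow> Cod C f = Y \<Longrightarrow> Idm C Y \<cdot> f = f"
  using cat_id[of "Dom C f" Y f] cod_ob[of f] dom_ob[of f] by simp
lemma id_right[simp]: "f \<in> Ar C \<Longrightarrow> Dom C f = X \<Longrightarrow> f \<cdot> Idm C X = f"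
  using cat_id[of X "Cod C f" f] cod_ob[of f] dom_ob[of f] by simp

lemma cat_assoc: "W \<in> Ob C \<Longrightarrow> X \<in> Ob C \<Longrightarrow> Y \<in> Ob C \<Longrightarrow> Z \<in> Ob C \<Longrightarrow>
   f \<in> hom C W X \<Longrightarrow> g \<in> hom C X Y \<Longrightarrow> h \<in> hom C Y Z \<Longrightarrow> h \<cdot> (g \<cdot> f) = (h \<cdot> g) \<cdot> f"
  using cat unfolding category_def by blast

lemma assoc[simp]: "f \<in> Ar C \<Longrightarrow> g \<in> Ar C \<Longrightarrow> h \<in> Ar C \<Longrightarrow> Cod C f = Dom C g \<Longrightarrow>
   Cod C g = Dom C h \<Longrightarrow> (h \<cdot> g) \<cdot> f = h \<cdot> g \<cdot> f"
  using cat_assoc[of "Dom C f" "Dom C g" "Dom C h" "Cod C h" f g h] by (simp add: hom_def)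

lemma zero_obj_ex: "\<exists>Z. is_zero_obj C Z"
  using proto unfolding protomodular_def pointed_def by blast

lemma term_unique: "is_terminal C T \<Longrightarrow> f \<in> hom C X T \<Longrightarrow> g \<in> hom C X T \<Longrightarrow> f = g"
proof -
  assume a: "is_terminal C T" "f \<in> hom C X T" "g \<in> hom C X T"
  then have "X \<in> Ob C" by auto
  then have "\<exists>!f. f \<in> hom C X T" using a(1) unfolding is_terminal_def by blast
  then show "f = g" using a(2,3) by blast
qed

lemma init_unique: "is_initial C T \<Longrightarrow> f \<in> hom C T X \<Longrightarrow> g \<in> hom C T X \<Longrightarrow> f = g"
proof -
  assume a: "is_initial C T" "f \<in> hom C T X" "g \<in> hom C T X"
  then have "X \<in> Ob C" by auto
  then have "\<exists>!f. f \<in> hom C T X" using a(1) unfolding is_initial_def by blast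
  then show "f = g" using a(2,3) by blast
qed

lemma zero_fact_unique:
  assumes "is_zero_obj C Z1" "a1 \<in> hom C X Z1" "b1 \<in> hom C Z1 Y"
    "is_zero_obj C Z2" "a2 \<in> hom C X Z2" "b2 \<in> hom C Z2 Y"
  shows "b1 \<cdot> a1 = b2 \<cdot> a2"
proof -
  have Z: "Z1 \<in> Ob C" "Z2 \<in> Ob C" using assms unfolding is_zero_obj_def is_initial_def by auto
  have "\<exists>t. t \<in> hom C Z1 Z2" using assms(1) Z unfolding is_zero_obj_def is_initial_def by blast
  then obtain t where t: "t \<in> hom C Z1 Z2" by blast
  have "t \<cdot> a1 \<in> hom C X Z2" using t assms by auto
  hence e1: "a2 = t \<cdot> a1" using assms(4,5) term_unique unfolding is_zero_obj_def by blast
  have "b2 \<cdot> t \<in> hom C Z1 Y" using t assms by auto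
  hence e2: "b1 = b2 \<cdot> t" using assms(1,3) init_unique unfolding is_zero_obj_def by blast
  show ?thesis using e1 e2 t assms by simp
qed

lemma zero_char:
  assumes "is_zero_obj C Z" "a \<in> hom C X Z" "b \<in> hom C Z Y"
  shows "zr X Y = b \<cdot> a"
  unfolding zero_mor_def
proof (rule the_equality)
  have "b \<cdot> a \<in> hom C X Y" using assms by auto
  then show "b \<cdot> a \<in> hom C X Y \<and> (\<exists>Z'. is_zero_obj C Z' \<and> (\<exists>a'\<in>hom C X Z'. \<exists>b'\<in>hom C Z' Y. b \<cdot> a = b' \<cdot> a'))"
    using assms(1,2,3) by blast
next
  fix f assume "f \<in> hom C X Y \<and> (\<exists>Z. is_zero_obj C Z \<and> (\<exists>a\<in>hom C X Z. \<exists>b\<in>hom C Z Y. f = b \<cdot> a))"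
  then obtain Z' a' b' where "is_zero_obj C Z'" "a' \<in> hom C X Z'" "b' \<in> hom C Z' Y" "f = b' \<cdot> a'" by blast
  then have "b \<cdot> a = b' \<cdot> a'" using zero_fact_unique[OF assms] by blast
  then show "f = b \<cdot> a" using \<open>f = b' \<cdot> a'\<close> by simp
qed

lemma zero_ex:
  assumes "X \<in> Ob C" "Y \<in> Ob C"
  obtains Z a b where "is_zero_obj C Z" "a \<in> hom C X Z" "b \<in> hom C Z Y"
proof -
  obtain Z where Z: "is_zero_obj C Z" using zero_obj_ex by blast
  then obtain a b where "a \<in> hom C X Z" "b \<in> hom C Z Y"
    using assms unfolding is_zero_obj_def is_initial_def is_terminal_def by blast
  then show ?thesis using that Z by blast
qed

lemma zero_ar[simp]: "X \<in> Ob C \<Longrightarrow> Y \<in> Ob C \<Longrightarrow> zr X Y \<in> Ar C"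
  and zero_dom[simp]: "X \<in> Ob C \<Longrightarrow> Y \<in> Ob C \<Longrightarrow> Dom C (zr X Y) = X"
  and zero_cod[simp]: "X \<in> Ob C \<Longrightarrow> Y \<in> Ob C \<Longrightarrow> Cod C (zr X Y) = Y"
proof -
  assume "X \<in> Ob C" "Y \<in> Ob C"
  then obtain Z a b where "is_zero_obj C Z" "a \<in> hom C X Z" "b \<in> hom C Z Y" by (rule zero_ex)
  then have "zr X Y = b \<cdot> a" "b \<cdot> a \<in> hom C X Y" using zero_char by auto
  then show "zr X Y \<in> Ar C" "Dom C (zr X Y) = X" "Cod C (zr X Y) = Y" by auto
qed

lemma zero_comp_r[simp]: "f \<in> Ar C \<Longrightarrow> Cod C f = X \<Longrightarrow> Y \<in> Ob C \<Longrightarrow> zr X Y \<cdot> f = zr (Dom C f) Y"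
proof -
  assume f: "f \<in> Ar C" "Cod C f = X" "Y \<in> Ob C"
  then have X: "X \<in> Ob C" by auto
  obtain Z a b where "is_zero_obj C Z" "a \<in> hom C X Z" "b \<in> hom C Z Y" using zero_ex[OF X f(3)] .
  moreover have "a \<cdot> f \<in> hom C (Dom C f) Z" using calculation f by auto
  ultimately have e: "zr (Dom C f) Y = b \<cdot> a \<cdot> f" "zr X Y = b \<cdot> a" using zero_char by blast+
  have as: "(b \<cdot> a) \<cdot> f = b \<cdot> a \<cdot> f" using f \<open>a \<in> hom C X Z\<close> \<open>b \<in> hom C Z Y\<close> by (intro assoc) auto
  have "zr X Y \<cdot> f = (b \<cdot> a) \<cdot> f" using e(2) by (rule arg_cong)
  also have "\<dots> = zr (Dom C f) Y" using as e(1) by (rule trans[OF _ sym])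
  finally show ?thesis .
qed

lemma zero_comp_l[simp]: "g \<in> Ar C \<Longrightarrow> Dom C g = Y \<Longrightarrow> X \<in> Ob C \<Longrightarrow> g \<cdot> zr X Y = zr X (Cod C g)"
proof -
  assume g: "g \<in> Ar C" "Dom C g = Y" "X \<in> Ob C"
  then have Y: "Y \<in> Ob C" by auto
  obtain Z a b where "is_zero_obj C Z" "a \<in> hom C X Z" "b \<in> hom C Z Y" using zero_ex[OF g(3) Y] .
  moreover have "g \<cdot> b \<in> hom C Z (Cod C g)" using calculation g by auto
  ultimately have e: "zr X (Cod C g) = (g \<cdot> b) \<cdot> a" "zr X Y = b \<cdot> a" using zero_char by blast+
  have as: "(g \<cdot> b) \<cdot> a = g \<cdot> b \<cdot> a" using g \<open>a \<in> hom C X Z\<close> \<open>b \<in> hom C Z Y\<close> by (intro assoc) auto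
  have "g \<cdot> zr X Y = g \<cdot> b \<cdot> a" using e(2) by (rule arg_cong)
  also have "\<dots> = zr X (Cod C g)" using as e(1) by simp
  finally show ?thesis .
qed


lemma eq_ext: "a \<cdot> b = c \<Longrightarrow> a \<in> Ar C \<Longrightarrow> b \<in> Ar C \<Longrightarrow> Cod C b = Dom C a \<Longrightarrow> x \<in> Ar C \<Longrightarrow>
   Cod C x = Dom C b \<Longrightarrow> a \<cdot> b \<cdot> x = c \<cdot> x"
  by (metis assoc)

lemma hom_ob: "f \<in> hom C X Y \<Longrightarrow> X \<in> Ob C \<and> Y \<in> Ob C"
  using dom_ob cod_ob by auto

end

locale prodl = pc +
  fixes X Y P p1 p2
  assumes isprod: "is_product C X Y P p1 p2"
begin

lemma obs[simp]: "X \<in> Ob C" "Y \<in> Ob C" "P \<in> Ob C"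
  using isprod unfolding is_product_def by auto

lemma pr_ar[simp]: "p1 \<in> Ar C" "Dom C p1 = P" "Cod C p1 = X" "p2 \<in> Ar C" "Dom C p2 = P" "Cod C p2 = Y"
  using isprod unfolding is_product_def by auto

lemma univ: "a \<in> hom C W X \<Longrightarrow> b \<in> hom C W Y \<Longrightarrow> \<exists>!h. h \<in> hom C W P \<and> p1 \<cdot> h = a \<and> p2 \<cdot> h = b"
  using isprod hom_ob unfolding is_product_def by blast

abbreviation pr where "pr a b \<equiv> prd C p1 p2 a b"

lemma pr_all:
  assumes "a \<in> Ar C" "b \<in> Ar C" "Cod C a = X" "Cod C b = Y" "Dom C b = Dom C a"
  shows "pr a b \<in> Ar C \<and> Dom C (pr a b) = Dom C a \<and> Cod C (pr a b) = P \<and> p1 \<cdot> pr a b = a \<and> p2 \<cdot> pr a b = b"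
proof -
  have ex: "\<exists>!h. h \<in> hom C (Dom C a) P \<and> p1 \<cdot> h = a \<and> p2 \<cdot> h = b" using univ assms by simp
  have "pr a b \<in> hom C (Dom C a) P \<and> p1 \<cdot> pr a b = a \<and> p2 \<cdot> pr a b = b"
    unfolding prd_def pr_ar(2) by (rule theI'[OF ex])
  then show ?thesis by simp
qed

lemma pr_ar'[simp]: "a \<in> Ar C \<Longrightarrow> b \<in> Ar C \<Longrightarrow> Cod C a = X \<Longrightarrow> Cod C b = Y \<Longrightarrow> Dom C b = Dom C a \<Longrightarrow> pr a b \<in> Ar C"
  and pr_dom[simp]: "a \<in> Ar C \<Longrightarrow> b \<in> Ar C \<Longrightarrow> Cod C a = X \<Longrightarrow> Cod C b = Y \<Longrightarrow> Dom C b = Dom C a \<Longrightarrow> Dom C (pr a b) = Dom C a"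
  and pr_cod[simp]: "a \<in> Ar C \<Longrightarrow> b \<in> Ar C \<Longrightarrow> Cod C a = X \<Longrightarrow> Cod C b = Y \<Longrightarrow> Dom C b = Dom C a \<Longrightarrow> Cod C (pr a b) = P"
  and pr_p1[simp]: "a \<in> Ar C \<Longrightarrow> b \<in> Ar C \<Longrightarrow> Cod C a = X \<Longrightarrow> Cod C b = Y \<Longrightarrow> Dom C b = Dom C a \<Longrightarrow> p1 \<cdot> pr a b = a"
  and pr_p2[simp]: "a \<in> Ar C \<Longrightarrow> b \<in> Ar C \<Longrightarrow> Cod C a = X \<Longrightarrow> Cod C b = Y \<Longrightarrow> Dom C b = Dom C a \<Longrightarrow> p2 \<cdot> pr a b = b"
  using pr_all by blast+

lemma ext:
  assumes "h \<in> Ar C" "h' \<in> Ar C" "Cod C h = P" "Cod C h' = P" "Dom C h' = Dom C h"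
    "p1 \<cdot> h = p1 \<cdot> h'" "p2 \<cdot> h = p2 \<cdot> h'"
  shows "h = h'"
proof -
  have "\<exists>!k. k \<in> hom C (Dom C h) P \<and> p1 \<cdot> k = p1 \<cdot> h \<and> p2 \<cdot> k = p2 \<cdot> h"
    using univ[of "p1 \<cdot> h" "Dom C h" "p2 \<cdot> h"] assms by simp
  moreover have "h \<in> hom C (Dom C h) P \<and> p1 \<cdot> h = p1 \<cdot> h \<and> p2 \<cdot> h = p2 \<cdot> h"
     "h' \<in> hom C (Dom C h) P \<and> p1 \<cdot> h' = p1 \<cdot> h \<and> p2 \<cdot> h' = p2 \<cdot> h" using assms by auto
  ultimately show ?thesis by (metis (no_types, lifting))
qed

lemma pr_eq:
  assumes "h \<in> Ar C" "Cod C h = P" "p1 \<cdot> h = a" "p2 \<cdot> h = b"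
  shows "pr a b = h"
proof -
  have q: "pr a b \<in> Ar C \<and> Dom C (pr a b) = Dom C a \<and> Cod C (pr a b) = P \<and> p1 \<cdot> pr a b = a \<and> p2 \<cdot> pr a b = b"
  proof (rule pr_all)
    show "a \<in> Ar C" "Cod C a = X" using assms(1,2) unfolding assms(3)[symmetric] by simp_all
    show "b \<in> Ar C" "Cod C b = Y" using assms(1,2) unfolding assms(4)[symmetric] by simp_all
    show "Dom C b = Dom C a" using assms(1,2) unfolding assms(3,4)[symmetric] by simp
  qed
  have d: "Dom C a = Dom C h" using assms(1,2) unfolding assms(3)[symmetric] by simp
  show ?thesis
  proof (rule ext)
    show "pr a b \<in> Ar C" "Cod C (pr a b) = P" "Dom C h = Dom C (pr a b)"
       "p1 \<cdot> pr a b = p1 \<cdot> h" "p2 \<cdot> pr a b = p2 \<cdot> h" using q d assms by simp_all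
  qed (use assms in simp_all)
qed

lemma pr_eta[simp]: "h \<in> Ar C \<Longrightarrow> Cod C h = P \<Longrightarrow> pr (p1 \<cdot> h) (p2 \<cdot> h) = h"
  using pr_eq by blast

lemma pr_comp[simp]:
  assumes "a \<in> Ar C" "b \<in> Ar C" "Cod C a = X" "Cod C b = Y" "Dom C b = Dom C a" "f \<in> Ar C" "Cod C f = Dom C a"
  shows "pr a b \<cdot> f = pr (a \<cdot> f) (b \<cdot> f)"
  using assms by (intro pr_eq[symmetric]) (auto simp flip: assoc)

definition "i1 = pr (Idm C X) (zr X Y)"
definition "i2 = pr (zr Y X) (Idm C Y)"

lemma i1[simp]: "i1 \<in> Ar C" "Dom C i1 = X" "Cod C i1 = P" "p1 \<cdot> i1 = Idm C X" "p2 \<cdot> i1 = zr X Y"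
  unfolding i1_def by simp_all
lemma i2[simp]: "i2 \<in> Ar C" "Dom C i2 = Y" "Cod C i2 = P" "p1 \<cdot> i2 = zr Y X" "p2 \<cdot> i2 = Idm C Y"
  unfolding i2_def by simp_all

lemma i1_eq: "h \<in> Ar C \<Longrightarrow> Cod C h = P \<Longrightarrow> p1 \<cdot> h = Idm C X \<Longrightarrow> p2 \<cdot> h = zr X Y \<Longrightarrow> h = i1"
  unfolding i1_def using pr_eq by simp
lemma i2_eq: "h \<in> Ar C \<Longrightarrow> Cod C h = P \<Longrightarrow> p1 \<cdot> h = zr Y X \<Longrightarrow> p2 \<cdot> h = Idm C Y \<Longrightarrow> h = i2"
  unfolding i2_def using pr_eq by simp

lemma pr_i1c[simp]: "a \<in> Ar C \<Longrightarrow> Cod C a = X \<Longrightarrow> Dom C a = W \<Longrightarrow> pr a (zr W Y) = i1 \<cdot> a"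
  unfolding i1_def by (subst pr_comp) auto

lemma pr_i2c[simp]: "b \<in> Ar C \<Longrightarrow> Cod C b = Y \<Longrightarrow> Dom C b = W \<Longrightarrow> pr (zr W X) b = i2 \<cdot> b"
  unfolding i2_def by (subst pr_comp) auto

lemma pr_id[simp]: "pr p1 p2 = Idm C P"
  using pr_eq[of "Idm C P" p1 p2] by simp

lemma i1p1: "k \<in> Ar C \<Longrightarrow> Cod C k = P \<Longrightarrow> p2 \<cdot> k = zr (Dom C k) Y \<Longrightarrow> i1 \<cdot> p1 \<cdot> k = k"
proof -
  assume k: "k \<in> Ar C" "Cod C k = P" "p2 \<cdot> k = zr (Dom C k) Y"
  have "i1 \<cdot> p1 \<cdot> k = pr (p1 \<cdot> k) (zr (Dom C k) Y)" using k unfolding i1_def by (simp flip: assoc)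
  also have "\<dots> = k" using k by (intro pr_eq) simp_all
  finally show ?thesis .
qed

lemma i2p2: "k \<in> Ar C \<Longrightarrow> Cod C k = P \<Longrightarrow> p1 \<cdot> k = zr (Dom C k) X \<Longrightarrow> i2 \<cdot> p2 \<cdot> k = k"
proof -
  assume k: "k \<in> Ar C" "Cod C k = P" "p1 \<cdot> k = zr (Dom C k) X"
  have "i2 \<cdot> p2 \<cdot> k = pr (zr (Dom C k) X) (p2 \<cdot> k)" using k unfolding i2_def by (simp flip: assoc)
  also have "\<dots> = k" using k by (intro pr_eq) simp_all
  finally show ?thesis .
qed

lemma kernel_i1: "is_kernel C i1 p2"
  unfolding is_kernel_def
proof (intro conjI ballI impI)
  fix W g assume W: "W \<in> Ob C" and g: "g \<in> hom C W (Dom C p2)" and g0: "p2 \<cdot> g = zr W (Cod C p2)"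
  have e: "i1 \<cdot> p1 \<cdot> g = g"
  proof -
    have "i1 \<cdot> p1 \<cdot> g = pr (p1 \<cdot> g) (zr W Y)" using g W unfolding i1_def by (simp flip: assoc)
    also have "\<dots> = g" using g g0 by (intro pr_eq) auto
    finally show ?thesis .
  qed
  show "\<exists>!h. h \<in> hom C W (Dom C i1) \<and> i1 \<cdot> h = g"
  proof (rule ex1I[of _ "p1 \<cdot> g"])
    show "p1 \<cdot> g \<in> hom C W (Dom C i1) \<and> i1 \<cdot> p1 \<cdot> g = g" using g e by simp
  next
    fix h assume "h \<in> hom C W (Dom C i1) \<and> i1 \<cdot> h = g"
    then have "p1 \<cdot> i1 \<cdot> h = p1 \<cdot> g" "h \<in> Ar C" "Dom C h = W" "Cod C h = X" by auto
    then show "h = p1 \<cdot> g" by (simp flip: assoc)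
  qed
qed simp_all

lemma kernel_i2: "is_kernel C i2 p1"
  unfolding is_kernel_def
proof (intro conjI ballI impI)
  fix W g assume W: "W \<in> Ob C" and g: "g \<in> hom C W (Dom C p1)" and g0: "p1 \<cdot> g = zr W (Cod C p1)"
  have e: "i2 \<cdot> p2 \<cdot> g = g"
  proof -
    have "i2 \<cdot> p2 \<cdot> g = pr (zr W X) (p2 \<cdot> g)" using g W unfolding i2_def by (simp flip: assoc)
    also have "\<dots> = g" using g g0 by (intro pr_eq) auto
    finally show ?thesis .
  qed
  show "\<exists>!h. h \<in> hom C W (Dom C i2) \<and> i2 \<cdot> h = g"
  proof (rule ex1I[of _ "p2 \<cdot> g"])
    show "p2 \<cdot> g \<in> hom C W (Dom C i2) \<and> i2 \<cdot> p2 \<cdot> g = g" using g e by simp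
  next
    fix h assume "h \<in> hom C W (Dom C i2) \<and> i2 \<cdot> h = g"
    then have "p2 \<cdot> i2 \<cdot> h = p2 \<cdot> g" "h \<in> Ar C" "Dom C h = W" "Cod C h = Y" by auto
    then show "h = p2 \<cdot> g" by (simp flip: assoc)
  qed
qed simp_all

lemma split_p2: "is_split_epi C p2"
  unfolding is_split_epi_def by (intro conjI bexI[of _ i2]) auto
lemma split_p1: "is_split_epi C p1"
  unfolding is_split_epi_def by (intro conjI bexI[of _ i1]) auto

lemma protosplit_i1: "protosplit_mono C i1"
  unfolding protosplit_mono_def using split_p2 kernel_i1 by blast
lemma protosplit_i2: "protosplit_mono C i2"
  unfolding protosplit_mono_def using split_p1 kernel_i2 by blast

end

context pc begin

lemma term_ex: "\<exists>T. is_terminal C T"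
  using proto unfolding protomodular_def has_finite_limits_def by blast

lemma pb_ex: "f \<in> Ar C \<Longrightarrow> g \<in> Ar C \<Longrightarrow> Cod C f = Cod C g \<Longrightarrow> \<exists>p q. is_pullback C f g p q"
  using proto unfolding protomodular_def has_finite_limits_def by blast

lemma pb_props: assumes "is_pullback C f g p q"
  shows "f \<in> Ar C" "g \<in> Ar C" "p \<in> Ar C" "q \<in> Ar C" "Cod C f = Cod C g" "Dom C q = Dom C p"
    "Cod C p = Dom C f" "Cod C q = Dom C g" "f \<cdot> p = g \<cdot> q"
  using assms unfolding is_pullback_def by auto

lemma pb_univ: assumes "is_pullback C f g p q" "a \<in> Ar C" "b \<in> Ar C" "Dom C b = Dom C a"
    "Cod C a = Dom C f" "Cod C b = Dom C g" "f \<cdot> a = g \<cdot> b"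
  obtains h where "h \<in> Ar C" "Dom C h = Dom C a" "Cod C h = Dom C p" "p \<cdot> h = a" "q \<cdot> h = b"
proof -
  have "\<forall>W \<in> Ob C. \<forall>a \<in> hom C W (Dom C f). \<forall>b \<in> hom C W (Dom C g).
        f \<cdot> a = g \<cdot> b \<longrightarrow> (\<exists>!h. h \<in> hom C W (Dom C p) \<and> p \<cdot> h = a \<and> q \<cdot> h = b)"
    using assms(1) unfolding is_pullback_def by blast
  moreover have "Dom C a \<in> Ob C" "a \<in> hom C (Dom C a) (Dom C f)" "b \<in> hom C (Dom C a) (Dom C g)"
    using assms by simp_all
  ultimately have "\<exists>!h. h \<in> hom C (Dom C a) (Dom C p) \<and> p \<cdot> h = a \<and> q \<cdot> h = b" using assms(7) by blast
  then show ?thesis using that by auto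
qed

lemma pb_uniq: assumes "is_pullback C f g p q" "h \<in> Ar C" "h' \<in> Ar C" "Dom C h' = Dom C h"
    "Cod C h = Dom C p" "Cod C h' = Dom C p" "p \<cdot> h = p \<cdot> h'" "q \<cdot> h = q \<cdot> h'"
  shows "h = h'"
proof -
  note P = pb_props[OF assms(1)]
  have "\<forall>W \<in> Ob C. \<forall>a \<in> hom C W (Dom C f). \<forall>b \<in> hom C W (Dom C g).
        f \<cdot> a = g \<cdot> b \<longrightarrow> (\<exists>!h. h \<in> hom C W (Dom C p) \<and> p \<cdot> h = a \<and> q \<cdot> h = b)"
    using assms(1) unfolding is_pullback_def by blast
  moreover have "Dom C h \<in> Ob C" "p \<cdot> h \<in> hom C (Dom C h) (Dom C f)" "q \<cdot> h \<in> hom C (Dom C h) (Dom C g)"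
    using assms P by simp_all
  moreover have "f \<cdot> (p \<cdot> h) = g \<cdot> (q \<cdot> h)" using assms P by (simp flip: assoc)
  ultimately have "\<exists>!k. k \<in> hom C (Dom C h) (Dom C p) \<and> p \<cdot> k = p \<cdot> h \<and> q \<cdot> k = q \<cdot> h" by blast
  moreover have "h \<in> hom C (Dom C h) (Dom C p)" "h' \<in> hom C (Dom C h) (Dom C p)" using assms by simp_all
  ultimately show ?thesis using assms(7,8) by metis
qed

lemma mono_cancel: assumes "is_mono C m" "a \<in> Ar C" "b \<in> Ar C" "Cod C a = Dom C m" "Cod C b = Dom C m"
   "Dom C b = Dom C a" "m \<cdot> a = m \<cdot> b"
  shows "a = b"
proof -
  have "\<forall>W \<in> Ob C. \<forall>a \<in> hom C W (Dom C m). \<forall>b \<in> hom C W (Dom C m). m \<cdot> a = m \<cdot> b \<longrightarrow> a = b"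
    using assms(1) unfolding is_mono_def by blast
  moreover have "Dom C a \<in> Ob C" "a \<in> hom C (Dom C a) (Dom C m)" "b \<in> hom C (Dom C a) (Dom C m)"
    using assms by simp_all
  ultimately show ?thesis using assms(7) by blast
qed

lemma mono_ar: "is_mono C m \<Longrightarrow> m \<in> Ar C"
  unfolding is_mono_def by blast

lemma monoI: assumes "m \<in> Ar C"
  "\<And>a b. a \<in> Ar C \<Longrightarrow> b \<in> Ar C \<Longrightarrow> Cod C a = Dom C m \<Longrightarrow> Cod C b = Dom C m \<Longrightarrow>
     Dom C b = Dom C a \<Longrightarrow> m \<cdot> a = m \<cdot> b \<Longrightarrow> a = b"
  shows "is_mono C m"
  unfolding is_mono_def using assms by simp

lemma prod_ex: assumes "X \<in> Ob C" "Y \<in> Ob C" shows "\<exists>P p1 p2. is_product C X Y P p1 p2"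
proof -
  obtain T where T: "is_terminal C T" using term_ex by blast
  then have TO: "T \<in> Ob C" unfolding is_terminal_def by blast
  obtain tx where tx: "tx \<in> hom C X T" using T assms unfolding is_terminal_def by blast
  obtain ty where ty: "ty \<in> hom C Y T" using T assms unfolding is_terminal_def by blast
  obtain p q where pb: "is_pullback C tx ty p q" using pb_ex[of tx ty] tx ty by auto
  note P = pb_props[OF pb]
  have "is_product C X Y (Dom C p) p q"
    unfolding is_product_def
  proof (intro conjI ballI)
    fix W a b assume W: "W \<in> Ob C" and a: "a \<in> hom C W X" and b: "b \<in> hom C W Y"
    have "tx \<cdot> a \<in> hom C W T" "ty \<cdot> b \<in> hom C W T" using a b tx ty by simp_all
    then have e: "tx \<cdot> a = ty \<cdot> b" using T term_unique by blast
    obtain h where h: "h \<in> Ar C" "Dom C h = Dom C a" "Cod C h = Dom C p" "p \<cdot> h = a" "q \<cdot> h = b"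
      using pb_univ[OF pb, of a b] a b tx ty e by auto
    show "\<exists>!h. h \<in> hom C W (Dom C p) \<and> p \<cdot> h = a \<and> q \<cdot> h = b"
    proof (rule ex1I[of _ h])
      show "h \<in> hom C W (Dom C p) \<and> p \<cdot> h = a \<and> q \<cdot> h = b" using h a by simp
    next
      fix h' assume "h' \<in> hom C W (Dom C p) \<and> p \<cdot> h' = a \<and> q \<cdot> h' = b"
      then show "h' = h" using pb_uniq[OF pb, of h' h] h a by simp
    qed
  qed (use assms P tx ty in simp_all)
  then show ?thesis by blast
qed

lemma ssf: "split_short_five C"
  using proto unfolding protomodular_def by blast

end

context prodl begin

lemma factor:
  assumes m: "is_mono C m" "m \<in> hom C M T" and psi: "\<psi> \<in> hom C P T"
    and f: "f1 \<in> hom C X M" "f2 \<in> hom C Y M" and e: "\<psi> \<cdot> i1 = m \<cdot> f1" "\<psi> \<cdot> i2 = m \<cdot> f2"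
  shows "\<exists>g. g \<in> hom C P M \<and> m \<cdot> g = \<psi>"
proof -
  have mA: "m \<in> Ar C" "Dom C m = M" "Cod C m = T" using m by auto
  have pA: "\<psi> \<in> Ar C" "Dom C \<psi> = P" "Cod C \<psi> = T" using psi by auto
  have fA: "f1 \<in> Ar C" "Dom C f1 = X" "Cod C f1 = M" "f2 \<in> Ar C" "Dom C f2 = Y" "Cod C f2 = M" using f by auto
  obtain n q where pb: "is_pullback C \<psi> m n q" using pb_ex[of \<psi> m] mA pA by auto
  note PB = pb_props[OF pb]
  define N where "N = Dom C n"
  have nA: "n \<in> Ar C" "Dom C n = N" "Cod C n = P" "q \<in> Ar C" "Dom C q = N" "Cod C q = M" "\<psi> \<cdot> n = m \<cdot> q"
    using PB mA pA N_def by auto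
  obtain e1 where e1: "e1 \<in> Ar C" "Dom C e1 = X" "Cod C e1 = N" "n \<cdot> e1 = i1" "q \<cdot> e1 = f1"
    using pb_univ[OF pb, of i1 f1] fA pA mA e nA by auto
  obtain e2 where e2: "e2 \<in> Ar C" "Dom C e2 = Y" "Cod C e2 = N" "n \<cdot> e2 = i2" "q \<cdot> e2 = f2"
    using pb_univ[OF pb, of i2 f2] fA pA mA e nA by auto
  have nmono: "t = t'" if "t \<in> Ar C" "t' \<in> Ar C" "Cod C t = N" "Cod C t' = N" "Dom C t' = Dom C t" "n \<cdot> t = n \<cdot> t'" for t t'
  proof -
    have "m \<cdot> q \<cdot> t = m \<cdot> q \<cdot> t'"
      using that nA mA pA by (metis assoc)
    then have "q \<cdot> t = q \<cdot> t'" using mono_cancel[OF m(1), of "q \<cdot> t" "q \<cdot> t'"] that nA mA by simp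
    then show ?thesis using pb_uniq[OF pb, of t t'] that nA by simp
  qed
  have ker: "is_kernel C e1 (p2 \<cdot> n)"
    unfolding is_kernel_def
  proof (intro conjI ballI impI)
    show "(p2 \<cdot> n) \<cdot> e1 = zr (Dom C e1) (Cod C (p2 \<cdot> n))" using e1 nA by simp
  next
    fix W g assume W: "W \<in> Ob C" and g: "g \<in> hom C W (Dom C (p2 \<cdot> n))" and g0: "(p2 \<cdot> n) \<cdot> g = zr W (Cod C (p2 \<cdot> n))"
    have gA: "g \<in> Ar C" "Dom C g = W" "Cod C g = N" using g nA by auto
    have g0': "p2 \<cdot> (n \<cdot> g) = zr (Dom C (n \<cdot> g)) Y" using g0 gA nA by simp
    have eq: "i1 \<cdot> p1 \<cdot> (n \<cdot> g) = n \<cdot> g" using i1p1[OF _ _ g0'] gA nA by simp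
    have eq2: "e1 \<cdot> p1 \<cdot> n \<cdot> g = g"
      using nmono[of "e1 \<cdot> p1 \<cdot> n \<cdot> g" g] eq e1 gA nA by (simp flip: assoc)
    show "\<exists>!h. h \<in> hom C W (Dom C e1) \<and> e1 \<cdot> h = g"
    proof (rule ex1I[of _ "p1 \<cdot> n \<cdot> g"])
      show "p1 \<cdot> n \<cdot> g \<in> hom C W (Dom C e1) \<and> e1 \<cdot> p1 \<cdot> n \<cdot> g = g" using eq2 gA nA e1 by simp
    next
      fix h assume h: "h \<in> hom C W (Dom C e1) \<and> e1 \<cdot> h = g"
      have c: "(p1 \<cdot> n) \<cdot> e1 = Idm C X" using e1 nA by simp
      have "p1 \<cdot> n \<cdot> g = p1 \<cdot> n \<cdot> e1 \<cdot> h" using h by simp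
      also have "\<dots> = ((p1 \<cdot> n) \<cdot> e1) \<cdot> h" using h e1(1-3) nA by simp
      also have "\<dots> = h" unfolding c using h e1 by simp
      finally show "h = p1 \<cdot> n \<cdot> g" by simp
    qed
  qed (use e1 nA in simp_all)
  have "is_iso C n"
    apply (rule ssf[unfolded split_short_five_def, rule_format, of e1 "p2 \<cdot> n" e2 i1 p2 i2 "Idm C X" n "Idm C Y"])
    using ker kernel_i1 e1 e2 nA unfolding is_iso_def
    by (simp add: bexI[of _ "Idm C X"] bexI[of _ "Idm C Y"])
  then obtain n' where n': "n' \<in> hom C P N" "n' \<cdot> n = Idm C N" "n \<cdot> n' = Idm C P"
    unfolding is_iso_def using nA by auto
  show ?thesis
  proof (intro exI conjI)
    show "q \<cdot> n' \<in> hom C P M" using n' nA by simp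
    have "m \<cdot> q \<cdot> n' = (\<psi> \<cdot> n) \<cdot> n'" using n' nA mA pA by simp
    also have "\<dots> = \<psi>" using n' nA(1-6) pA by simp
    finally show "m \<cdot> q \<cdot> n' = \<psi>" .
  qed
qed

end

context pc begin

lemma prodI: "is_product C X Y P p1 p2 \<Longrightarrow> prodl C X Y P p1 p2"
  by (simp add: prodl_def prodl_axioms_def pc_axioms)

lemma prod_obtain: assumes "X \<in> Ob C" "Y \<in> Ob C"
  obtains P p1 p2 where "prodl C X Y P p1 p2"
  using prod_ex[OF assms] prodI by blast

end

context prodl begin

lemma jointly_epic:
  assumes f: "f \<in> hom C P T" and g: "g \<in> hom C P T" and e: "f \<cdot> i1 = g \<cdot> i1" "f \<cdot> i2 = g \<cdot> i2"
  shows "f = g"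
proof -
  have fA: "f \<in> Ar C" "Dom C f = P" "Cod C f = T" "g \<in> Ar C" "Dom C g = P" "Cod C g = T" using f g by auto
  have "P \<in> Ob C" "T \<in> Ob C" using fA(1-3) dom_ob cod_ob by metis+
  then obtain Q q1 q2 where "prodl C P T Q q1 q2" using prod_obtain by blast
  then interpret Q: prodl C P T Q q1 q2 .
  define m where "m = Q.pr (Idm C P) f"
  define \<psi> where "\<psi> = Q.pr (Idm C P) g"
  have mA: "m \<in> Ar C" "Dom C m = P" "Cod C m = Q" "q1 \<cdot> m = Idm C P" "q2 \<cdot> m = f" unfolding m_def using fA by simp_all
  have pA: "\<psi> \<in> Ar C" "Dom C \<psi> = P" "Cod C \<psi> = Q" "q1 \<cdot> \<psi> = Idm C P" "q2 \<cdot> \<psi> = g" unfolding \<psi>_def using fA by simp_all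
  have mono: "is_mono C m"
  proof (rule monoI)
    fix a b assume ab: "a \<in> Ar C" "b \<in> Ar C" "Cod C a = Dom C m" "Cod C b = Dom C m" "Dom C b = Dom C a" "m \<cdot> a = m \<cdot> b"
    then have "q1 \<cdot> m \<cdot> a = q1 \<cdot> m \<cdot> b" by simp
    moreover have "q1 \<cdot> m \<cdot> a = a" "q1 \<cdot> m \<cdot> b = b" using ab(1-5) mA by (simp_all add: eq_ext[OF mA(4)])
    ultimately show "a = b" by simp
  qed (rule mA)
  have e1: "\<psi> \<cdot> i1 = m \<cdot> i1" unfolding m_def \<psi>_def using fA e by simp
  have e2: "\<psi> \<cdot> i2 = m \<cdot> i2" unfolding m_def \<psi>_def using fA e by simp
  obtain h where h: "h \<in> hom C P P" "m \<cdot> h = \<psi>"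
    using factor[OF mono, of P Q \<psi> i1 i2] mA pA e1 e2 by auto
  have "h = q1 \<cdot> m \<cdot> h" using h(1) mA by (simp add: eq_ext[OF mA(4)])
  also have "\<dots> = q1 \<cdot> \<psi>" using h(2) by simp
  also have "\<dots> = Idm C P" using pA by simp
  finally have "\<psi> = m" using h mA by simp
  then show ?thesis using mA pA by metis
qed

end

context pc begin



end

context prodl begin

lemma sc_unique1: assumes "strong_complete C X" "\<theta> \<in> hom C P X" "\<theta> \<cdot> i1 = Idm C X"
  shows "\<theta> = p1"
proof -
  have "\<forall>m. protosplit_mono C m \<and> Dom C m = X \<longrightarrow> (\<exists>!r. r \<in> hom C (Cod C m) X \<and> r \<cdot> m = Idm C X)"
    using assms(1) unfolding strong_complete_def by blast
  then have "\<exists>!r. r \<in> hom C (Cod C i1) X \<and> r \<cdot> i1 = Idm C X" using protosplit_i1 i1(2) by blast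
  then have "\<exists>!r. r \<in> hom C P X \<and> r \<cdot> i1 = Idm C X" by (simp only: i1(3))
  moreover have "p1 \<in> hom C P X \<and> p1 \<cdot> i1 = Idm C X" by simp
  ultimately show ?thesis using assms(2,3) by blast
qed

lemma sc_unique2: assumes "strong_complete C Y" "\<theta> \<in> hom C P Y" "\<theta> \<cdot> i2 = Idm C Y"
  shows "\<theta> = p2"
proof -
  have "\<forall>m. protosplit_mono C m \<and> Dom C m = Y \<longrightarrow> (\<exists>!r. r \<in> hom C (Cod C m) Y \<and> r \<cdot> m = Idm C Y)"
    using assms(1) unfolding strong_complete_def by blast
  then have "\<exists>!r. r \<in> hom C (Cod C i2) Y \<and> r \<cdot> i2 = Idm C Y" using protosplit_i2 i2(2) by blast
  then have "\<exists>!r. r \<in> hom C P Y \<and> r \<cdot> i2 = Idm C Y" by (simp only: i2(3))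
  moreover have "p2 \<in> hom C P Y \<and> p2 \<cdot> i2 = Idm C Y" by simp
  ultimately show ?thesis using assms(2,3) by blast
qed

end

context pc begin

lemma er_props: assumes "is_equiv_rel C Y R r1 r2"
  shows "r1 \<in> Ar C" "Dom C r1 = R" "Cod C r1 = Y" "r2 \<in> Ar C" "Dom C r2 = R" "Cod C r2 = Y"
  using assms unfolding is_equiv_rel_def by auto

lemma er_jm: assumes "is_equiv_rel C Y R r1 r2" "a \<in> Ar C" "b \<in> Ar C" "Cod C a = R" "Cod C b = R"
   "Dom C b = Dom C a" "r1 \<cdot> a = r1 \<cdot> b" "r2 \<cdot> a = r2 \<cdot> b"
  shows "a = b"
proof -
  have "\<forall>W \<in> Ob C. \<forall>a \<in> hom C W R. \<forall>b \<in> hom C W R.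
        r1 \<cdot> a = r1 \<cdot> b \<and> r2 \<cdot> a = r2 \<cdot> b \<longrightarrow> a = b" using assms(1) unfolding is_equiv_rel_def by blast
  moreover have "Dom C a \<in> Ob C" "a \<in> hom C (Dom C a) R" "b \<in> hom C (Dom C a) R" using assms by simp_all
  ultimately show ?thesis using assms(7,8) by blast
qed

lemma er_refl: assumes "is_equiv_rel C Y R r1 r2"
  obtains d where "d \<in> Ar C" "Dom C d = Y" "Cod C d = R" "r1 \<cdot> d = Idm C Y" "r2 \<cdot> d = Idm C Y"
  using assms unfolding is_equiv_rel_def by auto

lemma er_sym: assumes "is_equiv_rel C Y R r1 r2"
  obtains s where "s \<in> Ar C" "Dom C s = R" "Cod C s = R" "r1 \<cdot> s = r2" "r2 \<cdot> s = r1"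
  using assms unfolding is_equiv_rel_def by auto

lemma er_trans: assumes "is_equiv_rel C Y R r1 r2" "is_pullback C r2 r1 q1 q2"
  obtains t where "t \<in> Ar C" "Dom C t = Dom C q1" "Cod C t = R" "r1 \<cdot> t = r1 \<cdot> q1" "r2 \<cdot> t = r2 \<cdot> q2"
proof -
  have "\<forall>q1 q2. is_pullback C r2 r1 q1 q2 \<longrightarrow>
        (\<exists>\<tau> \<in> hom C (Dom C q1) R. r1 \<cdot> \<tau> = r1 \<cdot> q1 \<and> r2 \<cdot> \<tau> = r2 \<cdot> q2)"
    using assms(1) unfolding is_equiv_rel_def by blast
  then obtain t where "t \<in> hom C (Dom C q1) R" "r1 \<cdot> t = r1 \<cdot> q1" "r2 \<cdot> t = r2 \<cdot> q2" using assms(2) by blast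
  then show thesis using that[of t] by (simp del: in_hom add: hom_def)
qed

lemma bn_unpack: assumes "bourn_normal C m"
  obtains R r1 r2 PP \<pi>1 \<pi>2 mt where "is_mono C m" "is_equiv_rel C (Cod C m) R r1 r2"
    "prodl C (Dom C m) (Dom C m) PP \<pi>1 \<pi>2" "mt \<in> Ar C" "Dom C mt = PP" "Cod C mt = R"
    "r1 \<cdot> mt = m \<cdot> \<pi>1" "r2 \<cdot> mt = m \<cdot> \<pi>2" "is_pullback C r1 m mt \<pi>1"
proof -
  from assms obtain R r1 r2 PP \<pi>1 \<pi>2 mt where A: "is_mono C m" "is_equiv_rel C (Cod C m) R r1 r2"
    "is_product C (Dom C m) (Dom C m) PP \<pi>1 \<pi>2" "mt \<in> hom C PP R"
    "r1 \<cdot> mt = m \<cdot> \<pi>1" "r2 \<cdot> mt = m \<cdot> \<pi>2" "is_pullback C r1 m mt \<pi>1"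
    unfolding bourn_normal_def by blast
  have "mt \<in> Ar C" "Dom C mt = PP" "Cod C mt = R" using A(4) by simp_all
  then show thesis using that[of R r1 r2 PP \<pi>1 \<pi>2 mt] A prodI[OF A(3)] by blast
qed

lemma sc_normal: assumes sc: "strong_complete C B" and bn: "bourn_normal C n" and dn: "Dom C n = B"
  shows "\<exists>\<beta>. \<beta> \<in> hom C (Cod C n) B \<and> \<beta> \<cdot> n = Idm C B"
proof -
  obtain R r1 r2 PP \<pi>1 \<pi>2 mt where mono: "is_mono C n" and er: "is_equiv_rel C (Cod C n) R r1 r2"
    and pp0: "prodl C (Dom C n) (Dom C n) PP \<pi>1 \<pi>2" and mt: "mt \<in> Ar C" "Dom C mt = PP" "Cod C mt = R"
    "r1 \<cdot> mt = n \<cdot> \<pi>1" "r2 \<cdot> mt = n \<cdot> \<pi>2" and pb: "is_pullback C r1 n mt \<pi>1"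
    by (rule bn_unpack[OF bn])
  have pp: "prodl C B B PP \<pi>1 \<pi>2" using pp0 dn by simp
  interpret PP: prodl C B B PP \<pi>1 \<pi>2 by (rule pp)
  define Y where "Y = Cod C n"
  have nA: "n \<in> Ar C" "Dom C n = B" "Cod C n = Y" using mono_ar[OF mono] dn Y_def by simp_all
  note rA = er_props[OF er, unfolded Y_def[symmetric]]
  obtain d where d: "d \<in> Ar C" "Dom C d = Y" "Cod C d = R" "r1 \<cdot> d = Idm C Y" "r2 \<cdot> d = Idm C Y"
    using er_refl[OF er] Y_def by metis
  define k where "k = mt \<cdot> PP.i2"
  have kA: "k \<in> Ar C" "Dom C k = B" "Cod C k = R" unfolding k_def using mt by simp_all
  have r1k: "r1 \<cdot> k = zr B Y" unfolding k_def using mt rA nA by (simp add: eq_ext[OF mt(4)])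
  have r2k: "r2 \<cdot> k = n" unfolding k_def using mt rA nA by (simp add: eq_ext[OF mt(5)])
  have ker: "is_kernel C k r1"
    unfolding is_kernel_def
  proof (intro conjI ballI impI)
    fix W g assume W: "W \<in> Ob C" and g: "g \<in> hom C W (Dom C r1)" and g0: "r1 \<cdot> g = zr W (Cod C r1)"
    have gA: "g \<in> Ar C" "Dom C g = W" "Cod C g = R" using g rA by simp_all
    have "r1 \<cdot> g = n \<cdot> zr W B" using g0 nA rA W by simp
    then obtain h' where h': "h' \<in> Ar C" "Dom C h' = W" "Cod C h' = PP" "mt \<cdot> h' = g" "\<pi>1 \<cdot> h' = zr W B"
      using pb_univ[OF pb, of g "zr W B"] gA nA rA W mt by (simp, blast)
    have "PP.i2 \<cdot> \<pi>2 \<cdot> h' = h'" using PP.i2p2[of h'] h' by simp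
    then have kh: "k \<cdot> \<pi>2 \<cdot> h' = g" unfolding k_def using h' mt by simp
    show "\<exists>!h. h \<in> hom C W (Dom C k) \<and> k \<cdot> h = g"
    proof (rule ex1I[of _ "\<pi>2 \<cdot> h'"])
      show "\<pi>2 \<cdot> h' \<in> hom C W (Dom C k) \<and> k \<cdot> \<pi>2 \<cdot> h' = g" using kh h' kA by simp
    next
      fix h assume h: "h \<in> hom C W (Dom C k) \<and> k \<cdot> h = g"
      then have hA: "h \<in> Ar C" "Dom C h = W" "Cod C h = B" and hk: "k \<cdot> h = g" using kA by simp_all
      have "n \<cdot> h = r2 \<cdot> k \<cdot> h" using hA kA rA by (simp add: eq_ext[OF r2k])
      also have "\<dots> = r2 \<cdot> k \<cdot> \<pi>2 \<cdot> h'" using hk kh by simp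
      also have "\<dots> = n \<cdot> \<pi>2 \<cdot> h'" using kA rA h' by (simp add: eq_ext[OF r2k])
      finally show "h = \<pi>2 \<cdot> h'" using mono_cancel[OF mono, of h "\<pi>2 \<cdot> h'"] h h' kA nA by simp
    qed
  qed (use kA rA r1k nA in simp_all)
  have se: "is_split_epi C r1" unfolding is_split_epi_def using d rA by (intro conjI bexI[of _ d]) simp_all
  have "\<forall>m. protosplit_mono C m \<and> Dom C m = B \<longrightarrow> (\<exists>!r. r \<in> hom C (Cod C m) B \<and> r \<cdot> m = Idm C B)"
    using sc unfolding strong_complete_def by blast
  moreover have "protosplit_mono C k" unfolding protosplit_mono_def using se ker by blast
  ultimately have "\<exists>!r. r \<in> hom C (Cod C k) B \<and> r \<cdot> k = Idm C B" using kA by blast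
  then obtain \<rho> where \<rho>: "\<rho> \<in> hom C R B" "\<rho> \<cdot> k = Idm C B" using kA by (metis (no_types, lifting))
  have "\<rho> \<cdot> mt \<in> hom C PP B" "(\<rho> \<cdot> mt) \<cdot> PP.i2 = Idm C B" using \<rho> mt unfolding k_def by simp_all
  then have rm: "\<rho> \<cdot> mt = \<pi>2" using PP.sc_unique2[OF sc] by blast
  define \<Delta> where "\<Delta> = PP.pr (Idm C B) (Idm C B)"
  have DA: "\<Delta> \<in> Ar C" "Dom C \<Delta> = B" "Cod C \<Delta> = PP" "\<pi>1 \<cdot> \<Delta> = Idm C B" "\<pi>2 \<cdot> \<Delta> = Idm C B"
    unfolding \<Delta>_def by simp_all
  have dn: "d \<cdot> n = mt \<cdot> \<Delta>"
  proof (rule er_jm[OF er])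
    show "r1 \<cdot> d \<cdot> n = r1 \<cdot> mt \<cdot> \<Delta>" using d nA DA mt rA by (simp add: eq_ext[OF d(4)] eq_ext[OF mt(4)])
    show "r2 \<cdot> d \<cdot> n = r2 \<cdot> mt \<cdot> \<Delta>" using d nA DA mt rA by (simp add: eq_ext[OF d(5)] eq_ext[OF mt(5)])
  qed (use d nA DA mt in simp_all)
  show ?thesis
  proof (intro exI conjI)
    show "\<rho> \<cdot> d \<in> hom C (Cod C n) B" using \<rho> d nA by simp
    have "(\<rho> \<cdot> d) \<cdot> n = \<rho> \<cdot> mt \<cdot> \<Delta>" using \<rho> d nA dn by simp
    also have "\<dots> = Idm C B" using \<rho> mt DA by (simp add: eq_ext[OF rm])
    finally show "(\<rho> \<cdot> d) \<cdot> n = Idm C B" .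
  qed
qed

lemma pbI:
  assumes "f \<in> Ar C" "g \<in> Ar C" "p \<in> Ar C" "q \<in> Ar C" "Cod C f = Cod C g" "Dom C q = Dom C p"
    "Cod C p = Dom C f" "Cod C q = Dom C g" "f \<cdot> p = g \<cdot> q"
    and ex: "\<And>a b. a \<in> Ar C \<Longrightarrow> b \<in> Ar C \<Longrightarrow> Dom C b = Dom C a \<Longrightarrow> Cod C a = Dom C f \<Longrightarrow>
       Cod C b = Dom C g \<Longrightarrow> f \<cdot> a = g \<cdot> b \<Longrightarrow>
       \<exists>h. h \<in> Ar C \<and> Dom C h = Dom C a \<and> Cod C h = Dom C p \<and> p \<cdot> h = a \<and> q \<cdot> h = b"
    and un: "\<And>h h'. h \<in> Ar C \<Longrightarrow> h' \<in> Ar C \<Longrightarrow> Dom C h' = Dom C h \<Longrightarrow> Cod C h = Dom C p \<Longrightarrow>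
       Cod C h' = Dom C p \<Longrightarrow> p \<cdot> h = p \<cdot> h' \<Longrightarrow> q \<cdot> h = q \<cdot> h' \<Longrightarrow> h = h'"
  shows "is_pullback C f g p q"
  unfolding is_pullback_def
proof (intro conjI ballI impI)
  fix W a b assume W: "W \<in> Ob C" and a: "a \<in> hom C W (Dom C f)" and b: "b \<in> hom C W (Dom C g)"
    and e: "f \<cdot> a = g \<cdot> b"
  obtain h where h: "h \<in> Ar C" "Dom C h = Dom C a" "Cod C h = Dom C p" "p \<cdot> h = a" "q \<cdot> h = b"
    using ex[of a b] a b e by auto
  show "\<exists>!h. h \<in> hom C W (Dom C p) \<and> p \<cdot> h = a \<and> q \<cdot> h = b"
  proof (rule ex1I[of _ h])
    show "h \<in> hom C W (Dom C p) \<and> p \<cdot> h = a \<and> q \<cdot> h = b" using h a by simp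
  next
    fix h' assume "h' \<in> hom C W (Dom C p) \<and> p \<cdot> h' = a \<and> q \<cdot> h' = b"
    then show "h' = h" using un[of h' h] h a by simp
  qed
qed (use assms in simp_all)

lemma kernel_props: "is_kernel C k p \<Longrightarrow> k \<in> Ar C \<and> p \<in> Ar C \<and> Cod C k = Dom C p \<and> p \<cdot> k = zr (Dom C k) (Cod C p)"
  unfolding is_kernel_def by blast

lemma kernel_univ: assumes "is_kernel C k p" "g \<in> Ar C" "Cod C g = Dom C p" "p \<cdot> g = zr (Dom C g) (Cod C p)"
  shows "\<exists>h. h \<in> Ar C \<and> Dom C h = Dom C g \<and> Cod C h = Dom C k \<and> k \<cdot> h = g"
proof -
  have "\<forall>W \<in> Ob C. \<forall>g \<in> hom C W (Dom C p). p \<cdot> g = zr W (Cod C p) \<longrightarrow>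
        (\<exists>!h. h \<in> hom C W (Dom C k) \<and> k \<cdot> h = g)" using assms(1) unfolding is_kernel_def by blast
  moreover have "Dom C g \<in> Ob C" "g \<in> hom C (Dom C g) (Dom C p)" using assms by simp_all
  ultimately have "\<exists>!h. h \<in> hom C (Dom C g) (Dom C k) \<and> k \<cdot> h = g" using assms(4) by blast
  then show ?thesis by auto
qed

lemma kernel_mono: assumes "is_kernel C k p" shows "is_mono C k"
proof (rule monoI)
  show "k \<in> Ar C" using kernel_props[OF assms] by blast
next
  fix a b assume ab: "a \<in> Ar C" "b \<in> Ar C" "Cod C a = Dom C k" "Cod C b = Dom C k" "Dom C b = Dom C a" "k \<cdot> a = k \<cdot> b"
  have K: "k \<in> Ar C" "p \<in> Ar C" "Cod C k = Dom C p" "p \<cdot> k = zr (Dom C k) (Cod C p)" using kernel_props[OF assms] by blast+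
  have "\<forall>W \<in> Ob C. \<forall>g \<in> hom C W (Dom C p). p \<cdot> g = zr W (Cod C p) \<longrightarrow>
        (\<exists>!h. h \<in> hom C W (Dom C k) \<and> k \<cdot> h = g)" using assms(1) unfolding is_kernel_def by blast
  moreover have "Dom C a \<in> Ob C" "k \<cdot> a \<in> hom C (Dom C a) (Dom C p)" using ab K by simp_all
  moreover have "p \<cdot> (k \<cdot> a) = zr (Dom C a) (Cod C p)" using ab K by (simp add: eq_ext[OF K(4)])
  ultimately have "\<exists>!h. h \<in> hom C (Dom C a) (Dom C k) \<and> k \<cdot> h = k \<cdot> a" by blast
  moreover have "a \<in> hom C (Dom C a) (Dom C k) \<and> k \<cdot> a = k \<cdot> a" "b \<in> hom C (Dom C a) (Dom C k) \<and> k \<cdot> b = k \<cdot> a"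
    using ab by simp_all
  ultimately show "a = b" by blast
qed

lemma zero_to: "is_zero_obj C Z \<Longrightarrow> f \<in> Ar C \<Longrightarrow> Cod C f = Z \<Longrightarrow> f = zr (Dom C f) Z"
proof -
  assume a: "is_zero_obj C Z" "f \<in> Ar C" "Cod C f = Z"
  then have "Z \<in> Ob C" "Dom C f \<in> Ob C" unfolding is_zero_obj_def is_initial_def by auto
  then show ?thesis using term_unique[of Z f "Dom C f" "zr (Dom C f) Z"] a unfolding is_zero_obj_def by simp
qed

lemma bn_pack:
  assumes "is_mono C m" "is_equiv_rel C (Cod C m) R r1 r2" "is_product C (Dom C m) (Dom C m) PP \<pi>1 \<pi>2"
    "mt \<in> Ar C" "Dom C mt = PP" "Cod C mt = R" "r1 \<cdot> mt = m \<cdot> \<pi>1" "r2 \<cdot> mt = m \<cdot> \<pi>2" "is_pullback C r1 m mt \<pi>1"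
  shows "bourn_normal C m"
  unfolding bourn_normal_def using assms by (intro conjI exI[of _ R] exI[of _ r1] exI[of _ r2] exI[of _ PP]
     exI[of _ \<pi>1] exI[of _ \<pi>2] exI[of _ mt]) simp_all

lemma kernel_normal: assumes \<alpha>: "\<alpha> \<in> Ar C"
  shows "\<exists>\<kappa>. is_kernel C \<kappa> \<alpha> \<and> bourn_normal C \<kappa>"
proof -
  define Y A where "Y = Dom C \<alpha>" and "A = Cod C \<alpha>"
  have aA: "Dom C \<alpha> = Y" "Cod C \<alpha> = A" "Y \<in> Ob C" "A \<in> Ob C" using \<alpha> Y_def A_def by simp_all
  obtain Z0 where Z0: "is_zero_obj C Z0" using zero_obj_ex by blast
  then have Z0O: "Z0 \<in> Ob C" unfolding is_zero_obj_def is_initial_def by blast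
  define o0 where "o0 = zr Z0 A"
  have oA: "o0 \<in> Ar C" "Dom C o0 = Z0" "Cod C o0 = A" using Z0O aA o0_def by simp_all
  obtain \<kappa> t where pb: "is_pullback C \<alpha> o0 \<kappa> t" using pb_ex[of \<alpha> o0] \<alpha> oA aA by auto
  note PB = pb_props[OF pb]
  define K where "K = Dom C \<kappa>"
  have kA: "\<kappa> \<in> Ar C" "Dom C \<kappa> = K" "Cod C \<kappa> = Y" "t \<in> Ar C" "Dom C t = K" "Cod C t = Z0"
    using PB K_def aA oA by simp_all
  have KO: "K \<in> Ob C" using kA by (metis dom_ob)
  have ak: "\<alpha> \<cdot> \<kappa> = zr K A" using PB(9) kA oA aA Z0O unfolding o0_def by simp
  have ker: "is_kernel C \<kappa> \<alpha>"
    unfolding is_kernel_def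
  proof (intro conjI ballI impI)
    fix W g assume W: "W \<in> Ob C" and g: "g \<in> hom C W (Dom C \<alpha>)" and g0: "\<alpha> \<cdot> g = zr W (Cod C \<alpha>)"
    have gA: "g \<in> Ar C" "Dom C g = W" "Cod C g = Y" using g aA by simp_all
    have e: "\<alpha> \<cdot> g = o0 \<cdot> zr W Z0" using g0 aA W Z0O oA unfolding o0_def by simp
    obtain h where h: "h \<in> Ar C" "Dom C h = W" "Cod C h = K" "\<kappa> \<cdot> h = g" "t \<cdot> h = zr W Z0"
      using pb_univ[OF pb, of g "zr W Z0"] gA W Z0O oA aA e kA by (simp, blast)
    show "\<exists>!h. h \<in> hom C W (Dom C \<kappa>) \<and> \<kappa> \<cdot> h = g"
    proof (rule ex1I[of _ h])
      show "h \<in> hom C W (Dom C \<kappa>) \<and> \<kappa> \<cdot> h = g" using h kA by simp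
    next
      fix h' assume h': "h' \<in> hom C W (Dom C \<kappa>) \<and> \<kappa> \<cdot> h' = g"
      have "t \<cdot> h' = zr W Z0" using zero_to[OF Z0, of "t \<cdot> h'"] h' kA by simp
      then show "h' = h" using pb_uniq[OF pb, of h' h] h h' kA by simp
    qed
  qed (use kA aA ak \<alpha> in simp_all)
  have kmono: "is_mono C \<kappa>" by (rule kernel_mono[OF ker])
  obtain e1 e2 where epb: "is_pullback C \<alpha> \<alpha> e1 e2" using pb_ex[of \<alpha> \<alpha>] \<alpha> by auto
  note EP = pb_props[OF epb]
  define E where "E = Dom C e1"
  have eA: "e1 \<in> Ar C" "Dom C e1 = E" "Cod C e1 = Y" "e2 \<in> Ar C" "Dom C e2 = E" "Cod C e2 = Y" "\<alpha> \<cdot> e1 = \<alpha> \<cdot> e2"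
    using EP E_def aA by simp_all
  have epair: "\<exists>h. h \<in> Ar C \<and> Dom C h = Dom C u \<and> Cod C h = E \<and> e1 \<cdot> h = u \<and> e2 \<cdot> h = v"
    if "u \<in> Ar C" "v \<in> Ar C" "Dom C v = Dom C u" "Cod C u = Y" "Cod C v = Y" "\<alpha> \<cdot> u = \<alpha> \<cdot> v" for u v
    using pb_univ[OF epb, of u v] that aA eA by (simp, blast)
  have er: "is_equiv_rel C Y E e1 e2"
    unfolding is_equiv_rel_def
  proof (intro conjI ballI impI allI)
    show "e1 \<in> hom C E Y" "e2 \<in> hom C E Y" using eA by simp_all
  next
    fix W a b assume "W \<in> Ob C" "a \<in> hom C W E" "b \<in> hom C W E" "e1 \<cdot> a = e1 \<cdot> b \<and> e2 \<cdot> a = e2 \<cdot> b"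
    then show "a = b" using pb_uniq[OF epb, of a b] eA by simp
  next
    obtain d where d: "d \<in> Ar C" "Dom C d = Y" "Cod C d = E" "e1 \<cdot> d = Idm C Y" "e2 \<cdot> d = Idm C Y"
      using epair[of "Idm C Y" "Idm C Y"] aA by auto
    then show "\<exists>d\<in>hom C Y E. e1 \<cdot> d = Idm C Y \<and> e2 \<cdot> d = Idm C Y" by auto
  next
    obtain s where s: "s \<in> Ar C" "Dom C s = E" "Cod C s = E" "e1 \<cdot> s = e2" "e2 \<cdot> s = e1"
      using epair[of e2 e1] eA by auto
    then show "\<exists>\<sigma>\<in>hom C E E. e1 \<cdot> \<sigma> = e2 \<and> e2 \<cdot> \<sigma> = e1" by auto
  next
    fix q1 q2 assume qp: "is_pullback C e2 e1 q1 q2"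
    note QP = pb_props[OF qp]
    have qA: "q1 \<in> Ar C" "Cod C q1 = E" "q2 \<in> Ar C" "Cod C q2 = E" "Dom C q2 = Dom C q1" "e2 \<cdot> q1 = e1 \<cdot> q2"
      using QP eA by simp_all
    have "\<alpha> \<cdot> e1 \<cdot> q1 = \<alpha> \<cdot> e2 \<cdot> q2"
    proof -
      have "\<alpha> \<cdot> e1 \<cdot> q1 = \<alpha> \<cdot> e2 \<cdot> q1" using qA(1-5) eA \<alpha> aA by (simp add: eq_ext[OF eA(7)])
      also have "\<dots> = \<alpha> \<cdot> e1 \<cdot> q2" using qA by simp
      also have "\<dots> = \<alpha> \<cdot> e2 \<cdot> q2" using qA(1-5) eA \<alpha> aA by (simp add: eq_ext[OF eA(7)])
      finally show ?thesis .
    qed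
    then obtain \<tau> where "\<tau> \<in> Ar C" "Dom C \<tau> = Dom C q1" "Cod C \<tau> = E" "e1 \<cdot> \<tau> = e1 \<cdot> q1" "e2 \<cdot> \<tau> = e2 \<cdot> q2"
      using epair[of "e1 \<cdot> q1" "e2 \<cdot> q2"] qA eA by auto
    then show "\<exists>\<tau>\<in>hom C (Dom C q1) E. e1 \<cdot> \<tau> = e1 \<cdot> q1 \<and> e2 \<cdot> \<tau> = e2 \<cdot> q2" by auto
  qed
  obtain KK s1 s2 where "prodl C K K KK s1 s2" using prod_obtain[OF KO KO] by blast
  then interpret KK: prodl C K K KK s1 s2 .
  have eqz: "\<alpha> \<cdot> \<kappa> \<cdot> s1 = \<alpha> \<cdot> \<kappa> \<cdot> s2" using kA aA \<alpha> KO by (simp add: eq_ext[OF ak])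
  obtain mt where mt: "mt \<in> Ar C" "Dom C mt = KK" "Cod C mt = E" "e1 \<cdot> mt = \<kappa> \<cdot> s1" "e2 \<cdot> mt = \<kappa> \<cdot> s2"
    using epair[of "\<kappa> \<cdot> s1" "\<kappa> \<cdot> s2"] kA eqz by auto
  have mpb: "is_pullback C e1 \<kappa> mt s1"
  proof (rule pbI)
    fix u v assume uv: "u \<in> Ar C" "v \<in> Ar C" "Dom C v = Dom C u" "Cod C u = Dom C e1" "Cod C v = Dom C \<kappa>" "e1 \<cdot> u = \<kappa> \<cdot> v"
    have "\<alpha> \<cdot> e2 \<cdot> u = zr (Dom C u) (Cod C \<alpha>)"
    proof -
      have "\<alpha> \<cdot> e2 \<cdot> u = \<alpha> \<cdot> e1 \<cdot> u" using uv(1-5) eA aA \<alpha> by (simp add: eq_ext[OF eA(7)])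
      also have "\<dots> = \<alpha> \<cdot> \<kappa> \<cdot> v" using uv by simp
      also have "\<dots> = zr (Dom C u) (Cod C \<alpha>)" using uv kA aA \<alpha> KO by (simp add: eq_ext[OF ak])
      finally show ?thesis .
    qed
    then obtain s where s: "s \<in> Ar C" "Dom C s = Dom C u" "Cod C s = K" "\<kappa> \<cdot> s = e2 \<cdot> u"
      using kernel_univ[OF ker, of "e2 \<cdot> u"] uv eA aA kA by auto
    define h where "h = KK.pr v s"
    have hA: "h \<in> Ar C" "Dom C h = Dom C u" "Cod C h = KK" "s1 \<cdot> h = v" "s2 \<cdot> h = s"
      unfolding h_def using uv s kA by simp_all
    have "mt \<cdot> h = u"
    proof (rule pb_uniq[OF epb])
      show "e1 \<cdot> mt \<cdot> h = e1 \<cdot> u" using hA mt uv kA eA by (simp add: eq_ext[OF mt(4)])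
      show "e2 \<cdot> mt \<cdot> h = e2 \<cdot> u" using hA mt uv kA s eA by (simp add: eq_ext[OF mt(5)])
    qed (use hA mt uv eA in simp_all)
    then show "\<exists>h. h \<in> Ar C \<and> Dom C h = Dom C u \<and> Cod C h = Dom C mt \<and> mt \<cdot> h = u \<and> s1 \<cdot> h = v"
      using hA mt by auto
  next
    fix h h' assume hh: "h \<in> Ar C" "h' \<in> Ar C" "Dom C h' = Dom C h" "Cod C h = Dom C mt" "Cod C h' = Dom C mt"
      "mt \<cdot> h = mt \<cdot> h'" "s1 \<cdot> h = s1 \<cdot> h'"
    have "\<kappa> \<cdot> s2 \<cdot> h = \<kappa> \<cdot> s2 \<cdot> h'"
    proof -
      have "\<kappa> \<cdot> s2 \<cdot> h = e2 \<cdot> mt \<cdot> h" using hh(1-5) mt kA eA by (simp add: eq_ext[OF mt(5)])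
      also have "\<dots> = e2 \<cdot> mt \<cdot> h'" using hh by simp
      also have "\<dots> = \<kappa> \<cdot> s2 \<cdot> h'" using hh(1-5) mt kA eA by (simp add: eq_ext[OF mt(5)])
      finally show ?thesis .
    qed
    then have "s2 \<cdot> h = s2 \<cdot> h'" using mono_cancel[OF kmono, of "s2 \<cdot> h" "s2 \<cdot> h'"] hh mt kA by simp
    then show "h = h'" using KK.ext[of h h'] hh mt by simp
  qed (use eA kA mt in simp_all)
  have "bourn_normal C \<kappa>"
    by (rule bn_pack[of \<kappa> E e1 e2 KK s1 s2 mt]) (use kmono er kA mt KK.isprod mpb in simp_all)
  then show ?thesis using ker by blast
qed

lemma pb_mono: assumes pb: "is_pullback C f g p q" and mg: "is_mono C g" shows "is_mono C p"
proof (rule monoI)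
  note P = pb_props[OF pb]
  show "p \<in> Ar C" using P by simp
  fix a b assume ab: "a \<in> Ar C" "b \<in> Ar C" "Cod C a = Dom C p" "Cod C b = Dom C p" "Dom C b = Dom C a" "p \<cdot> a = p \<cdot> b"
  have "g \<cdot> q \<cdot> a = g \<cdot> q \<cdot> b"
  proof -
    have "g \<cdot> q \<cdot> a = f \<cdot> p \<cdot> a" using ab(1-5) P(1-8) by (simp add: eq_ext[OF P(9)[symmetric]])
    also have "\<dots> = f \<cdot> p \<cdot> b" using ab by simp
    also have "\<dots> = g \<cdot> q \<cdot> b" using ab(1-5) P(1-8) by (simp add: eq_ext[OF P(9)[symmetric]])
    finally show ?thesis .
  qed
  then have "q \<cdot> a = q \<cdot> b" using mono_cancel[OF mg, of "q \<cdot> a" "q \<cdot> b"] ab P by simp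
  then show "a = b" using pb_uniq[OF pb, of a b] ab by simp
qed

lemma mono_comp: assumes "is_mono C m" "is_mono C a" "Cod C a = Dom C m" shows "is_mono C (m \<cdot> a)"
proof (rule monoI)
  have A: "m \<in> Ar C" "a \<in> Ar C" using assms mono_ar by blast+
  then show "m \<cdot> a \<in> Ar C" using assms by simp
  fix x y assume xy: "x \<in> Ar C" "y \<in> Ar C" "Cod C x = Dom C (m \<cdot> a)" "Cod C y = Dom C (m \<cdot> a)"
    "Dom C y = Dom C x" "(m \<cdot> a) \<cdot> x = (m \<cdot> a) \<cdot> y"
  have xy': "Cod C x = Dom C a" "Cod C y = Dom C a" using xy A assms by simp_all
  have "m \<cdot> (a \<cdot> x) = m \<cdot> (a \<cdot> y)" using xy xy' A assms by simp
  then have "a \<cdot> x = a \<cdot> y" using mono_cancel[OF assms(1), of "a \<cdot> x" "a \<cdot> y"] xy xy' A assms by simp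
  then show "x = y" using mono_cancel[OF assms(2), of x y] xy xy' by simp
qed

lemma bn_meet:
  assumes bn1: "bourn_normal C m1" and bn2: "bourn_normal C m2" and pb: "is_pullback C m1 m2 a1 a2"
  shows "bourn_normal C (m1 \<cdot> a1)"
proof -
  note P = pb_props[OF pb]
  define Y S1 S2 S where "Y = Cod C m1" and "S1 = Dom C m1" and "S2 = Dom C m2" and "S = Dom C a1"
  obtain R1 r11 r12 P1 \<pi>11 \<pi>12 mt1 where mono1: "is_mono C m1" and er1: "is_equiv_rel C (Cod C m1) R1 r11 r12"
    and pp1: "prodl C (Dom C m1) (Dom C m1) P1 \<pi>11 \<pi>12" and mt1: "mt1 \<in> Ar C" "Dom C mt1 = P1" "Cod C mt1 = R1"
    "r11 \<cdot> mt1 = m1 \<cdot> \<pi>11" "r12 \<cdot> mt1 = m1 \<cdot> \<pi>12" and pb1: "is_pullback C r11 m1 mt1 \<pi>11"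
    by (rule bn_unpack[OF bn1])
  obtain R2 r21 r22 P2 \<pi>21 \<pi>22 mt2 where mono2: "is_mono C m2" and er2: "is_equiv_rel C (Cod C m2) R2 r21 r22"
    and pp2: "prodl C (Dom C m2) (Dom C m2) P2 \<pi>21 \<pi>22" and mt2: "mt2 \<in> Ar C" "Dom C mt2 = P2" "Cod C mt2 = R2"
    "r21 \<cdot> mt2 = m2 \<cdot> \<pi>21" "r22 \<cdot> mt2 = m2 \<cdot> \<pi>22" and pb2: "is_pullback C r21 m2 mt2 \<pi>21"
    by (rule bn_unpack[OF bn2])
  have mA: "m1 \<in> Ar C" "Dom C m1 = S1" "Cod C m1 = Y" "m2 \<in> Ar C" "Dom C m2 = S2" "Cod C m2 = Y"
    "a1 \<in> Ar C" "Dom C a1 = S" "Cod C a1 = S1" "a2 \<in> Ar C" "Dom C a2 = S" "Cod C a2 = S2"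
    "m1 \<cdot> a1 = m2 \<cdot> a2"
    using P Y_def S1_def S2_def S_def by simp_all
  have obs: "Y \<in> Ob C" "S \<in> Ob C" "S1 \<in> Ob C" "S2 \<in> Ob C" using mA by (metis cod_ob dom_ob)+
  interpret P1: prodl C S1 S1 P1 \<pi>11 \<pi>12 using pp1 S1_def by simp
  interpret P2: prodl C S2 S2 P2 \<pi>21 \<pi>22 using pp2 S2_def by simp
  note r1A = er_props[OF er1, unfolded Y_def[symmetric]]
  note r2A = er_props[OF er2, unfolded mA(6)]
  note er1' = er1[unfolded Y_def[symmetric]]
  note er2' = er2[unfolded mA(6)]
  obtain YY c1 c2 where "prodl C Y Y YY c1 c2" using prod_obtain[OF obs(1) obs(1)] by blast
  then interpret YY: prodl C Y Y YY c1 c2 .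
  define \<rho>1 \<rho>2 where "\<rho>1 = YY.pr r11 r12" and "\<rho>2 = YY.pr r21 r22"
  have rhoA: "\<rho>1 \<in> Ar C" "Dom C \<rho>1 = R1" "Cod C \<rho>1 = YY" "\<rho>2 \<in> Ar C" "Dom C \<rho>2 = R2" "Cod C \<rho>2 = YY"
    unfolding \<rho>1_def \<rho>2_def using r1A r2A by simp_all
  obtain t1 t2 where tpb: "is_pullback C \<rho>1 \<rho>2 t1 t2" using pb_ex[of \<rho>1 \<rho>2] rhoA by auto
  note TP = pb_props[OF tpb]
  define R where "R = Dom C t1"
  have tA: "t1 \<in> Ar C" "Dom C t1 = R" "Cod C t1 = R1" "t2 \<in> Ar C" "Dom C t2 = R" "Cod C t2 = R2"
    using TP R_def rhoA by simp_all
  have tt: "YY.pr (r11 \<cdot> t1) (r12 \<cdot> t1) = YY.pr (r21 \<cdot> t2) (r22 \<cdot> t2)"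
    using TP(9) tA r1A r2A unfolding \<rho>1_def \<rho>2_def by simp
  have t1e: "r21 \<cdot> t2 = r11 \<cdot> t1"
  proof -
    have "c1 \<cdot> YY.pr (r11 \<cdot> t1) (r12 \<cdot> t1) = c1 \<cdot> YY.pr (r21 \<cdot> t2) (r22 \<cdot> t2)" using tt by simp
    then show ?thesis using tA r1A r2A by simp
  qed
  have t2e: "r22 \<cdot> t2 = r12 \<cdot> t1"
  proof -
    have "c2 \<cdot> YY.pr (r11 \<cdot> t1) (r12 \<cdot> t1) = c2 \<cdot> YY.pr (r21 \<cdot> t2) (r22 \<cdot> t2)" using tt by simp
    then show ?thesis using tA r1A r2A by simp
  qed
  have Rpair: "\<exists>h. h \<in> Ar C \<and> Dom C h = Dom C u1 \<and> Cod C h = R \<and> t1 \<cdot> h = u1 \<and> t2 \<cdot> h = u2"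
    if u: "u1 \<in> Ar C" "u2 \<in> Ar C" "Dom C u2 = Dom C u1" "Cod C u1 = R1" "Cod C u2 = R2"
      "r11 \<cdot> u1 = r21 \<cdot> u2" "r12 \<cdot> u1 = r22 \<cdot> u2" for u1 u2
  proof -
    have "\<rho>1 \<cdot> u1 = \<rho>2 \<cdot> u2" unfolding \<rho>1_def \<rho>2_def using u r1A r2A by simp
    then show ?thesis using pb_univ[OF tpb, of u1 u2] u rhoA tA by (simp, blast)
  qed
  have Runiq: "h = h'" if h: "h \<in> Ar C" "h' \<in> Ar C" "Dom C h' = Dom C h" "Cod C h = R" "Cod C h' = R"
     "t1 \<cdot> h = t1 \<cdot> h'" "t2 \<cdot> h = t2 \<cdot> h'" for h h'
    using pb_uniq[OF tpb, of h h'] h tA by simp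
  define r1 r2 where "r1 = r11 \<cdot> t1" and "r2 = r12 \<cdot> t1"
  have rA: "r1 \<in> Ar C" "Dom C r1 = R" "Cod C r1 = Y" "r2 \<in> Ar C" "Dom C r2 = R" "Cod C r2 = Y"
    unfolding r1_def r2_def using tA r1A by simp_all
  have er: "is_equiv_rel C Y R r1 r2"
    unfolding is_equiv_rel_def
  proof (intro conjI ballI impI allI)
    show "r1 \<in> hom C R Y" "r2 \<in> hom C R Y" using rA by simp_all
  next
    fix W a b assume ab: "W \<in> Ob C" "a \<in> hom C W R" "b \<in> hom C W R" "r1 \<cdot> a = r1 \<cdot> b \<and> r2 \<cdot> a = r2 \<cdot> b"
    have ab': "a \<in> Ar C" "b \<in> Ar C" "Dom C a = W" "Dom C b = W" "Cod C a = R" "Cod C b = R"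
      "r11 \<cdot> t1 \<cdot> a = r11 \<cdot> t1 \<cdot> b" "r12 \<cdot> t1 \<cdot> a = r12 \<cdot> t1 \<cdot> b"
      using ab tA r1A unfolding r1_def r2_def by simp_all
    have "t1 \<cdot> a = t1 \<cdot> b" using er_jm[OF er1', of "t1 \<cdot> a" "t1 \<cdot> b"] ab' tA by simp
    moreover have "r21 \<cdot> t2 \<cdot> a = r21 \<cdot> t2 \<cdot> b" "r22 \<cdot> t2 \<cdot> a = r22 \<cdot> t2 \<cdot> b"
      using ab' tA r1A r2A by (simp_all add: eq_ext[OF t1e] eq_ext[OF t2e])
    then have "t2 \<cdot> a = t2 \<cdot> b" using er_jm[OF er2', of "t2 \<cdot> a" "t2 \<cdot> b"] ab' tA by simp
    ultimately show "a = b" using Runiq[of a b] ab' by simp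
  next
    obtain d1 where d1: "d1 \<in> Ar C" "Dom C d1 = Y" "Cod C d1 = R1" "r11 \<cdot> d1 = Idm C Y" "r12 \<cdot> d1 = Idm C Y"
      by (rule er_refl[OF er1'])
    obtain d2 where d2: "d2 \<in> Ar C" "Dom C d2 = Y" "Cod C d2 = R2" "r21 \<cdot> d2 = Idm C Y" "r22 \<cdot> d2 = Idm C Y"
      by (rule er_refl[OF er2'])
    obtain d where d: "d \<in> Ar C" "Dom C d = Y" "Cod C d = R" "t1 \<cdot> d = d1" "t2 \<cdot> d = d2"
      using Rpair[of d1 d2] d1 d2 by (simp, blast)
    have "r1 \<cdot> d = Idm C Y" "r2 \<cdot> d = Idm C Y" unfolding r1_def r2_def using d d1 tA r1A by simp_all
    then show "\<exists>d\<in>hom C Y R. r1 \<cdot> d = Idm C Y \<and> r2 \<cdot> d = Idm C Y" using d by auto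
  next
    obtain s1 where s1: "s1 \<in> Ar C" "Dom C s1 = R1" "Cod C s1 = R1" "r11 \<cdot> s1 = r12" "r12 \<cdot> s1 = r11"
      by (rule er_sym[OF er1'])
    obtain s2 where s2: "s2 \<in> Ar C" "Dom C s2 = R2" "Cod C s2 = R2" "r21 \<cdot> s2 = r22" "r22 \<cdot> s2 = r21"
      by (rule er_sym[OF er2'])
    have "r11 \<cdot> s1 \<cdot> t1 = r21 \<cdot> s2 \<cdot> t2" "r12 \<cdot> s1 \<cdot> t1 = r22 \<cdot> s2 \<cdot> t2"
      using s1 s2 tA r1A r2A t1e t2e by (simp_all add: eq_ext[OF s1(4)] eq_ext[OF s1(5)] eq_ext[OF s2(4)] eq_ext[OF s2(5)])
    then obtain \<sigma> where \<sigma>: "\<sigma> \<in> Ar C" "Dom C \<sigma> = R" "Cod C \<sigma> = R" "t1 \<cdot> \<sigma> = s1 \<cdot> t1" "t2 \<cdot> \<sigma> = s2 \<cdot> t2"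
      using Rpair[of "s1 \<cdot> t1" "s2 \<cdot> t2"] s1 s2 tA by (simp, blast)
    have "r1 \<cdot> \<sigma> = r2" "r2 \<cdot> \<sigma> = r1" unfolding r1_def r2_def
      using \<sigma> s1 tA r1A by (simp_all add: eq_ext[OF s1(4)] eq_ext[OF s1(5)])
    then show "\<exists>\<sigma>\<in>hom C R R. r1 \<cdot> \<sigma> = r2 \<and> r2 \<cdot> \<sigma> = r1" using \<sigma> by auto
  next
    fix q1 q2 assume qp: "is_pullback C r2 r1 q1 q2"
    note QP = pb_props[OF qp]
    define Q where "Q = Dom C q1"
    have qA: "q1 \<in> Ar C" "Dom C q1 = Q" "Cod C q1 = R" "q2 \<in> Ar C" "Dom C q2 = Q" "Cod C q2 = R"
      using QP rA Q_def by simp_all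
    have qe: "r12 \<cdot> t1 \<cdot> q1 = r11 \<cdot> t1 \<cdot> q2" using QP(9) qA tA r1A unfolding r1_def r2_def by simp
    obtain b1 b2 where bpb: "is_pullback C r12 r11 b1 b2" using pb_ex[of r12 r11] r1A by auto
    note BP = pb_props[OF bpb]
    obtain c where c: "c \<in> Ar C" "Dom C c = Q" "Cod C c = Dom C b1" "b1 \<cdot> c = t1 \<cdot> q1" "b2 \<cdot> c = t1 \<cdot> q2"
      using pb_univ[OF bpb, of "t1 \<cdot> q1" "t1 \<cdot> q2"] qA tA r1A qe by (simp, blast)
    obtain \<tau>1 where \<tau>1: "\<tau>1 \<in> Ar C" "Dom C \<tau>1 = Dom C b1" "Cod C \<tau>1 = R1" "r11 \<cdot> \<tau>1 = r11 \<cdot> b1" "r12 \<cdot> \<tau>1 = r12 \<cdot> b2"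
      by (rule er_trans[OF er1' bpb])
    have qe2: "r22 \<cdot> t2 \<cdot> q1 = r21 \<cdot> t2 \<cdot> q2"
      using qe qA tA r1A r2A by (simp add: eq_ext[OF t1e] eq_ext[OF t2e])
    obtain b1' b2' where bpb': "is_pullback C r22 r21 b1' b2'" using pb_ex[of r22 r21] r2A by auto
    note BP' = pb_props[OF bpb']
    obtain c' where c': "c' \<in> Ar C" "Dom C c' = Q" "Cod C c' = Dom C b1'" "b1' \<cdot> c' = t2 \<cdot> q1" "b2' \<cdot> c' = t2 \<cdot> q2"
      using pb_univ[OF bpb', of "t2 \<cdot> q1" "t2 \<cdot> q2"] qA tA r2A qe2 by (simp, blast)
    obtain \<tau>2 where \<tau>2: "\<tau>2 \<in> Ar C" "Dom C \<tau>2 = Dom C b1'" "Cod C \<tau>2 = R2" "r21 \<cdot> \<tau>2 = r21 \<cdot> b1'" "r22 \<cdot> \<tau>2 = r22 \<cdot> b2'"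
      by (rule er_trans[OF er2' bpb'])
    have bA: "b1 \<in> Ar C" "Cod C b1 = R1" "b2 \<in> Ar C" "Cod C b2 = R1" "Dom C b2 = Dom C b1"
      "b1' \<in> Ar C" "Cod C b1' = R2" "b2' \<in> Ar C" "Cod C b2' = R2" "Dom C b2' = Dom C b1'"
      using BP BP' r1A r2A by simp_all
    have x1: "r11 \<cdot> \<tau>1 \<cdot> c = r11 \<cdot> t1 \<cdot> q1"
    proof -
      have "r11 \<cdot> \<tau>1 \<cdot> c = r11 \<cdot> b1 \<cdot> c" using \<tau>1 c bA r1A by (simp add: eq_ext[OF \<tau>1(4)])
      then show ?thesis using c by simp
    qed
    have x2: "r12 \<cdot> \<tau>1 \<cdot> c = r12 \<cdot> t1 \<cdot> q2"
    proof -
      have "r12 \<cdot> \<tau>1 \<cdot> c = r12 \<cdot> b2 \<cdot> c" using \<tau>1 c bA r1A by (simp add: eq_ext[OF \<tau>1(5)])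
      then show ?thesis using c by simp
    qed
    have x3: "r21 \<cdot> \<tau>2 \<cdot> c' = r11 \<cdot> t1 \<cdot> q1"
    proof -
      have "r21 \<cdot> \<tau>2 \<cdot> c' = r21 \<cdot> b1' \<cdot> c'" using \<tau>2 c' bA r2A by (simp add: eq_ext[OF \<tau>2(4)])
      also have "\<dots> = r21 \<cdot> t2 \<cdot> q1" using c' by simp
      also have "\<dots> = r11 \<cdot> t1 \<cdot> q1" using qA tA r1A r2A by (simp add: eq_ext[OF t1e])
      finally show ?thesis .
    qed
    have x4: "r22 \<cdot> \<tau>2 \<cdot> c' = r12 \<cdot> t1 \<cdot> q2"
    proof -
      have "r22 \<cdot> \<tau>2 \<cdot> c' = r22 \<cdot> b2' \<cdot> c'" using \<tau>2 c' bA r2A by (simp add: eq_ext[OF \<tau>2(5)])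
      also have "\<dots> = r22 \<cdot> t2 \<cdot> q2" using c' by simp
      also have "\<dots> = r12 \<cdot> t1 \<cdot> q2" using qA tA r1A r2A by (simp add: eq_ext[OF t2e])
      finally show ?thesis .
    qed
    obtain \<tau> where \<tau>: "\<tau> \<in> Ar C" "Dom C \<tau> = Q" "Cod C \<tau> = R" "t1 \<cdot> \<tau> = \<tau>1 \<cdot> c" "t2 \<cdot> \<tau> = \<tau>2 \<cdot> c'"
      using Rpair[of "\<tau>1 \<cdot> c" "\<tau>2 \<cdot> c'"] \<tau>1 \<tau>2 c c' x1 x2 x3 x4 by (simp, blast)
    have "r1 \<cdot> \<tau> = r1 \<cdot> q1" "r2 \<cdot> \<tau> = r2 \<cdot> q2" unfolding r1_def r2_def
      using \<tau> tA r1A qA x1 x2 \<tau>1 c by simp_all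
    then show "\<exists>\<tau>\<in>hom C (Dom C q1) R. r1 \<cdot> \<tau> = r1 \<cdot> q1 \<and> r2 \<cdot> \<tau> = r2 \<cdot> q2" using \<tau> qA by auto
  qed
  have a1mono: "is_mono C a1" using pb_mono[OF pb mono2] .
  define m where "m = m1 \<cdot> a1"
  have mmA: "m \<in> Ar C" "Dom C m = S" "Cod C m = Y" unfolding m_def using mA by simp_all
  have mmono: "is_mono C m" unfolding m_def using mono_comp[OF mono1 a1mono] mA by simp
  obtain SS w1 w2 where "prodl C S S SS w1 w2" using prod_obtain[OF obs(2) obs(2)] by blast
  then interpret SS: prodl C S S SS w1 w2 .
  define A1 A2 where "A1 = P1.pr (a1 \<cdot> w1) (a1 \<cdot> w2)" and "A2 = P2.pr (a2 \<cdot> w1) (a2 \<cdot> w2)"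
  have AA: "A1 \<in> Ar C" "Dom C A1 = SS" "Cod C A1 = P1" "\<pi>11 \<cdot> A1 = a1 \<cdot> w1" "\<pi>12 \<cdot> A1 = a1 \<cdot> w2"
    "A2 \<in> Ar C" "Dom C A2 = SS" "Cod C A2 = P2" "\<pi>21 \<cdot> A2 = a2 \<cdot> w1" "\<pi>22 \<cdot> A2 = a2 \<cdot> w2"
    unfolding A1_def A2_def using mA by simp_all
  note mA' = mA(1-12)
  note mt1' = mt1(1-3)[unfolded S1_def[symmetric]] and mt2' = mt2(1-3)[unfolded S2_def[symmetric]]
  have y1: "r11 \<cdot> mt1 \<cdot> A1 = m1 \<cdot> a1 \<cdot> w1" using r1A mt1 AA mA' by (simp add: eq_ext[OF mt1(4)] eq_ext[OF AA(4)])
  have y2: "r21 \<cdot> mt2 \<cdot> A2 = m1 \<cdot> a1 \<cdot> w1" using r2A mt2 AA mA'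
    by (simp add: eq_ext[OF mt2(4)] eq_ext[OF AA(9)] eq_ext[OF mA(13)[symmetric]])
  have y3: "r12 \<cdot> mt1 \<cdot> A1 = m1 \<cdot> a1 \<cdot> w2" using r1A mt1 AA mA' by (simp add: eq_ext[OF mt1(5)] eq_ext[OF AA(5)])
  have y4: "r22 \<cdot> mt2 \<cdot> A2 = m1 \<cdot> a1 \<cdot> w2" using r2A mt2 AA mA'
    by (simp add: eq_ext[OF mt2(5)] eq_ext[OF AA(10)] eq_ext[OF mA(13)[symmetric]])
  obtain mt where mt: "mt \<in> Ar C" "Dom C mt = SS" "Cod C mt = R" "t1 \<cdot> mt = mt1 \<cdot> A1" "t2 \<cdot> mt = mt2 \<cdot> A2"
    using Rpair[of "mt1 \<cdot> A1" "mt2 \<cdot> A2"] mt1 mt2 AA y1 y2 y3 y4 by (simp, blast)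
  have rm1: "r1 \<cdot> mt = m \<cdot> w1" unfolding r1_def m_def using mt tA r1A y1 mA' by (simp add: eq_ext[OF mt(4)])
  have rm2: "r2 \<cdot> mt = m \<cdot> w2" unfolding r2_def m_def using mt tA r1A y3 mA' by (simp add: eq_ext[OF mt(4)])
  have mpb: "is_pullback C r1 m mt w1"
  proof (rule pbI)
    fix u v assume uv0: "u \<in> Ar C" "v \<in> Ar C" "Dom C v = Dom C u" "Cod C u = Dom C r1" "Cod C v = Dom C m" "r1 \<cdot> u = m \<cdot> v"
    have uv: "u \<in> Ar C" "v \<in> Ar C" "Dom C v = Dom C u" "Cod C u = R" "Cod C v = S" using uv0 rA mmA by simp_all
    have e0: "r11 \<cdot> t1 \<cdot> u = m1 \<cdot> a1 \<cdot> v" using uv0(6) uv tA r1A mA' unfolding r1_def m_def by simp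
    obtain h1 where h1: "h1 \<in> Ar C" "Dom C h1 = Dom C u" "Cod C h1 = P1" "mt1 \<cdot> h1 = t1 \<cdot> u" "\<pi>11 \<cdot> h1 = a1 \<cdot> v"
      using pb_univ[OF pb1, of "t1 \<cdot> u" "a1 \<cdot> v"] uv tA r1A mA' mt1 e0 by (simp, blast)
    have e0': "r21 \<cdot> t2 \<cdot> u = m2 \<cdot> a2 \<cdot> v"
    proof -
      have "r21 \<cdot> t2 \<cdot> u = r11 \<cdot> t1 \<cdot> u" using uv tA r1A r2A by (simp add: eq_ext[OF t1e])
      also have "\<dots> = m1 \<cdot> a1 \<cdot> v" by (rule e0)
      also have "\<dots> = m2 \<cdot> a2 \<cdot> v" using uv mA' by (simp add: eq_ext[OF mA(13)])
      finally show ?thesis .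
    qed
    obtain h2 where h2: "h2 \<in> Ar C" "Dom C h2 = Dom C u" "Cod C h2 = P2" "mt2 \<cdot> h2 = t2 \<cdot> u" "\<pi>21 \<cdot> h2 = a2 \<cdot> v"
      using pb_univ[OF pb2, of "t2 \<cdot> u" "a2 \<cdot> v"] uv tA r2A mA' mt2 e0' by (simp, blast)
    have e1: "m1 \<cdot> \<pi>12 \<cdot> h1 = m2 \<cdot> \<pi>22 \<cdot> h2"
    proof -
      have "m1 \<cdot> \<pi>12 \<cdot> h1 = r12 \<cdot> mt1 \<cdot> h1" using h1(1-3) mA' r1A mt1' by (simp add: eq_ext[OF mt1(5)])
      also have "\<dots> = r12 \<cdot> t1 \<cdot> u" using h1 by simp
      also have "\<dots> = r22 \<cdot> t2 \<cdot> u" using uv tA r1A r2A by (simp add: eq_ext[OF t2e])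
      also have "\<dots> = r22 \<cdot> mt2 \<cdot> h2" using h2 by simp
      also have "\<dots> = m2 \<cdot> \<pi>22 \<cdot> h2" using h2(1-3) mA' r2A mt2' by (simp add: eq_ext[OF mt2(5)])
      finally show ?thesis .
    qed
    obtain s where s: "s \<in> Ar C" "Dom C s = Dom C u" "Cod C s = S" "a1 \<cdot> s = \<pi>12 \<cdot> h1" "a2 \<cdot> s = \<pi>22 \<cdot> h2"
      using pb_univ[OF pb, of "\<pi>12 \<cdot> h1" "\<pi>22 \<cdot> h2"] h1 h2 mA' e1 by (simp, blast)
    define h where "h = SS.pr v s"
    have hA: "h \<in> Ar C" "Dom C h = Dom C u" "Cod C h = SS" "w1 \<cdot> h = v" "w2 \<cdot> h = s"
      unfolding h_def using uv s by simp_all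
    have A1h: "A1 \<cdot> h = h1"
    proof (rule P1.ext)
      show "\<pi>11 \<cdot> A1 \<cdot> h = \<pi>11 \<cdot> h1" using hA AA mA' h1 by (simp add: eq_ext[OF AA(4)])
      show "\<pi>12 \<cdot> A1 \<cdot> h = \<pi>12 \<cdot> h1" using hA AA mA' h1 s by (simp add: eq_ext[OF AA(5)])
    qed (use hA AA h1 in simp_all)
    have A2h: "A2 \<cdot> h = h2"
    proof (rule P2.ext)
      show "\<pi>21 \<cdot> A2 \<cdot> h = \<pi>21 \<cdot> h2" using hA AA mA' h2 by (simp add: eq_ext[OF AA(9)])
      show "\<pi>22 \<cdot> A2 \<cdot> h = \<pi>22 \<cdot> h2" using hA AA mA' h2 s by (simp add: eq_ext[OF AA(10)])
    qed (use hA AA h2 in simp_all)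
    have "mt \<cdot> h = u"
    proof (rule Runiq)
      show "t1 \<cdot> mt \<cdot> h = t1 \<cdot> u" using hA mt tA AA mt1 A1h h1 by (simp add: eq_ext[OF mt(4)])
      show "t2 \<cdot> mt \<cdot> h = t2 \<cdot> u" using hA mt tA AA mt2 A2h h2 by (simp add: eq_ext[OF mt(5)])
    qed (use hA mt uv in simp_all)
    then show "\<exists>h. h \<in> Ar C \<and> Dom C h = Dom C u \<and> Cod C h = Dom C mt \<and> mt \<cdot> h = u \<and> w1 \<cdot> h = v"
      using hA mt by (intro exI[of _ h]) simp
  next
    fix h h' assume hh: "h \<in> Ar C" "h' \<in> Ar C" "Dom C h' = Dom C h" "Cod C h = Dom C mt" "Cod C h' = Dom C mt"
      "mt \<cdot> h = mt \<cdot> h'" "w1 \<cdot> h = w1 \<cdot> h'"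
    have "m \<cdot> w2 \<cdot> h = m \<cdot> w2 \<cdot> h'"
    proof -
      have "m \<cdot> w2 \<cdot> h = r2 \<cdot> mt \<cdot> h" using hh(1-5) mt rA mmA by (simp add: eq_ext[OF rm2[symmetric]])
      also have "\<dots> = r2 \<cdot> mt \<cdot> h'" using hh by simp
      also have "\<dots> = m \<cdot> w2 \<cdot> h'" using hh(1-5) mt rA mmA by (simp add: eq_ext[OF rm2[symmetric]])
      finally show ?thesis .
    qed
    then have "w2 \<cdot> h = w2 \<cdot> h'" using mono_cancel[OF mmono, of "w2 \<cdot> h" "w2 \<cdot> h'"] hh mt mmA by simp
    then show "h = h'" using SS.ext[of h h'] hh mt by simp
  qed (use rA mmA mt rm1 in simp_all)
  have "bourn_normal C m"
    by (rule bn_pack[of m R r1 r2 SS w1 w2 mt]) (use mmono er mmA mt SS.isprod mpb rm1 rm2 in simp_all)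
  then show ?thesis unfolding m_def .
qed

lemma main:
  assumes H2: "\<forall>m. bourn_normal C m \<longrightarrow> (\<exists>z. is_centralizer C m z \<and> bourn_normal C z)"
    and ab: "abelian_obj C A" and cs: "complete_star C A" and sc: "strong_complete C B"
    and hBA: "hom C B A = {zr B A}" and pr: "is_product C B A P p1 p2"
  shows "complete_star C P"
  unfolding complete_star_def
proof (intro conjI allI impI)
  interpret X: prodl C B A P p1 p2 using prodI[OF pr] .
  show "P \<in> Ob C" by simp
  fix m assume mm: "bourn_normal C m \<and> Dom C m = P"
  then have bnm: "bourn_normal C m" and dm: "Dom C m = P" by blast+
  have mmono: "is_mono C m" using bnm unfolding bourn_normal_def by blast
  define Y where "Y = Cod C m"
  have mA: "m \<in> Ar C" "Dom C m = P" "Cod C m = Y" using mono_ar[OF mmono] dm Y_def by simp_all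
  have YO: "Y \<in> Ob C" using mA by (metis cod_ob)
  obtain z where cz: "is_centralizer C m z" and bnz: "bourn_normal C z" using H2 bnm by blast
  have zmono: "is_mono C z" using bnz unfolding bourn_normal_def by blast
  define Z where "Z = Dom C z"
  have cmz: "commute C m z" and cuniq: "\<forall>g \<in> Ar C. commute C m g \<longrightarrow> (\<exists>!h. h \<in> hom C (Dom C g) (Dom C z) \<and> z \<cdot> h = g)"
    using cz unfolding is_centralizer_def by blast+
  obtain PZ q1 q2 j1 j2 \<phi> where PZ: "is_product C P Z PZ q1 q2" and j1: "j1 \<in> hom C P PZ" "q1 \<cdot> j1 = Idm C P"
     "q2 \<cdot> j1 = zr P Z" and j2: "j2 \<in> hom C Z PZ" "q1 \<cdot> j2 = zr Z P" "q2 \<cdot> j2 = Idm C Z"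
     and \<phi>: "\<phi> \<in> hom C PZ Y" "\<phi> \<cdot> j1 = m" "\<phi> \<cdot> j2 = z"
    using cmz unfolding commute_def mA(2,3) Z_def[symmetric] by blast
  have zA: "z \<in> Ar C" "Dom C z = Z" "Cod C z = Y" using cmz Z_def mA unfolding commute_def by simp_all
  have ZO: "Z \<in> Ob C" using zA by (metis dom_ob)
  interpret PZ: prodl C P Z PZ q1 q2 using prodI[OF PZ] .
  have j1e: "j1 = PZ.i1" using PZ.i1_eq[of j1] j1 by simp
  have j2e: "j2 = PZ.i2" using PZ.i2_eq[of j2] j2 by simp
  have \<phi>A: "\<phi> \<in> Ar C" "Dom C \<phi> = PZ" "Cod C \<phi> = Y" "\<phi> \<cdot> PZ.i1 = m" "\<phi> \<cdot> PZ.i2 = z"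
    using \<phi> j1e j2e by simp_all
  have h_ex: "\<exists>h. h \<in> hom C A Z \<and> z \<cdot> h = m \<cdot> X.i2"
  proof -
    have AO: "A \<in> Ob C" "B \<in> Ob C" "P \<in> Ob C" by simp_all
    obtain QA a1 a2 k1 k2 \<phi>A where QA: "is_product C A A QA a1 a2" and k1: "k1 \<in> hom C A QA" "a1 \<cdot> k1 = Idm C A"
      "a2 \<cdot> k1 = zr A A" and k2: "k2 \<in> hom C A QA" "a1 \<cdot> k2 = zr A A" "a2 \<cdot> k2 = Idm C A"
      and \<phi>A: "\<phi>A \<in> hom C QA A" "\<phi>A \<cdot> k1 = Idm C A" "\<phi>A \<cdot> k2 = Idm C A"
      using ab unfolding abelian_obj_def commute_def using AO by auto
    interpret QA: prodl C A A QA a1 a2 using prodI[OF QA] .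
    have \<phi>AA: "\<phi>A \<in> Ar C" "Dom C \<phi>A = QA" "Cod C \<phi>A = A" "\<phi>A \<cdot> QA.i1 = Idm C A" "\<phi>A \<cdot> QA.i2 = Idm C A"
      using \<phi>A QA.i1_eq[of k1] QA.i2_eq[of k2] k1 k2 by simp_all
    obtain PA b1 b2 where "prodl C P A PA b1 b2" using prod_obtain[OF AO(3) AO(1)] by blast
    then interpret PA: prodl C P A PA b1 b2 .
    define \<theta> where "\<theta> = X.pr (p1 \<cdot> b1) (\<phi>A \<cdot> QA.pr (p2 \<cdot> b1) b2)"
    have \<theta>A: "\<theta> \<in> Ar C" "Dom C \<theta> = PA" "Cod C \<theta> = P" unfolding \<theta>_def using \<phi>AA by simp_all
    have \<theta>1: "\<theta> \<cdot> PA.i1 = Idm C P" unfolding \<theta>_def using \<phi>AA by (simp add: eq_ext[OF \<phi>AA(4)])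
    have \<theta>2: "\<theta> \<cdot> PA.i2 = X.i2" unfolding \<theta>_def using \<phi>AA by (simp add: eq_ext[OF \<phi>AA(5)])
    have "commute C m (m \<cdot> X.i2)"
      unfolding commute_def
      apply (intro conjI)
         prefer 4
         apply (rule exI[of _ PA], rule exI[of _ b1], rule exI[of _ b2], rule exI[of _ PA.i1], rule exI[of _ PA.i2],
           rule exI[of _ "m \<cdot> \<theta>"])
      using mA \<theta>A \<theta>1 \<theta>2 PA.isprod by simp_all
    moreover have "m \<cdot> X.i2 \<in> Ar C" using mA by simp
    ultimately have "\<exists>!h. h \<in> hom C (Dom C (m \<cdot> X.i2)) (Dom C z) \<and> z \<cdot> h = m \<cdot> X.i2" using cuniq by blast
    then show ?thesis using mA zA by auto
  qed
  then obtain h where h: "h \<in> Ar C" "Dom C h = A" "Cod C h = Z" "z \<cdot> h = m \<cdot> X.i2" by auto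
  have pbA: "is_pullback C m z X.i2 h"
  proof (rule pbI)
    fix a b assume ab0: "a \<in> Ar C" "b \<in> Ar C" "Dom C b = Dom C a" "Cod C a = Dom C m" "Cod C b = Dom C z" "m \<cdot> a = z \<cdot> b"
    define W where "W = Dom C a"
    have ab: "a \<in> Ar C" "b \<in> Ar C" "Dom C a = W" "Dom C b = W" "Cod C a = P" "Cod C b = Z" using ab0 mA zA W_def by simp_all
    have WO: "W \<in> Ob C" using ab by (metis dom_ob)
    have BO: "B \<in> Ob C" by simp
    obtain BW c1 c2 where "prodl C B W BW c1 c2" using prod_obtain[OF BO WO] by blast
    then interpret BW: prodl C B W BW c1 c2 .
    define \<mu> where "\<mu> = PZ.pr (X.i1 \<cdot> c1) (b \<cdot> c2)"
    have \<mu>A: "\<mu> \<in> Ar C" "Dom C \<mu> = BW" "Cod C \<mu> = PZ" unfolding \<mu>_def using ab by simp_all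
    define \<psi> where "\<psi> = \<phi> \<cdot> \<mu>"
    have \<psi>A: "\<psi> \<in> Ar C" "Dom C \<psi> = BW" "Cod C \<psi> = Y" unfolding \<psi>_def using \<mu>A \<phi>A by simp_all
    have \<psi>1: "\<psi> \<cdot> BW.i1 = m \<cdot> X.i1" unfolding \<psi>_def \<mu>_def using \<phi>A ab mA by (simp add: eq_ext[OF \<phi>A(4)])
    have \<psi>2': "\<psi> \<cdot> BW.i2 = z \<cdot> b" unfolding \<psi>_def \<mu>_def using \<phi>A ab mA by (simp add: eq_ext[OF \<phi>A(5)])
    have \<psi>2: "\<psi> \<cdot> BW.i2 = m \<cdot> a" using \<psi>2' ab0(6) by simp
    obtain g where g: "g \<in> hom C BW P" "m \<cdot> g = \<psi>"
      using BW.factor[OF mmono, of P Y \<psi> X.i1 a] mA \<psi>A \<psi>1 \<psi>2 ab by auto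
    have gA: "g \<in> Ar C" "Dom C g = BW" "Cod C g = P" using g by simp_all
    have g1: "g \<cdot> BW.i1 = X.i1"
    proof (rule mono_cancel[OF mmono])
      show "m \<cdot> g \<cdot> BW.i1 = m \<cdot> X.i1" using gA mA \<psi>1 by (simp add: eq_ext[OF g(2)])
    qed (use gA mA in simp_all)
    have g2: "g \<cdot> BW.i2 = a"
    proof (rule mono_cancel[OF mmono])
      show "m \<cdot> g \<cdot> BW.i2 = m \<cdot> a" using gA mA \<psi>2 by (simp add: eq_ext[OF g(2)])
    qed (use gA mA ab in simp_all)
    have p1g: "p1 \<cdot> g = c1" using BW.sc_unique1[OF sc, of "p1 \<cdot> g"] gA g1 by (simp add: eq_ext[OF g1])
    have pa: "p1 \<cdot> a = zr W B"
    proof -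
      have "p1 \<cdot> a = p1 \<cdot> g \<cdot> BW.i2" using g2 by simp
      also have "\<dots> = c1 \<cdot> BW.i2" using gA by (simp add: eq_ext[OF p1g])
      also have "\<dots> = zr W B" by simp
      finally show ?thesis .
    qed
    have ia: "X.i2 \<cdot> p2 \<cdot> a = a" using X.i2p2[of a] ab pa by simp
    have hb: "h \<cdot> p2 \<cdot> a = b"
    proof (rule mono_cancel[OF zmono])
      have "z \<cdot> h \<cdot> p2 \<cdot> a = m \<cdot> X.i2 \<cdot> p2 \<cdot> a" using h zA ab mA by (simp add: eq_ext[OF h(4)])
      also have "\<dots> = m \<cdot> a" using ia by simp
      also have "\<dots> = z \<cdot> b" by (rule ab0(6))
      finally show "z \<cdot> h \<cdot> p2 \<cdot> a = z \<cdot> b" .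
    qed (use h ab zA in simp_all)
    show "\<exists>u. u \<in> Ar C \<and> Dom C u = Dom C a \<and> Cod C u = Dom C X.i2 \<and> X.i2 \<cdot> u = a \<and> h \<cdot> u = b"
      using ia hb ab by (intro exI[of _ "p2 \<cdot> a"]) simp
  next
    fix u u' assume uu: "u \<in> Ar C" "u' \<in> Ar C" "Dom C u' = Dom C u" "Cod C u = Dom C X.i2" "Cod C u' = Dom C X.i2"
      "X.i2 \<cdot> u = X.i2 \<cdot> u'" "h \<cdot> u = h \<cdot> u'"
    have "p2 \<cdot> X.i2 \<cdot> u = p2 \<cdot> X.i2 \<cdot> u'" using uu(6) by simp
    then show "u = u'" using uu(1-5) by (simp add: eq_ext[OF X.i2(5)])
  qed (use mA zA h in simp_all)
  have "bourn_normal C (m \<cdot> X.i2)" by (rule bn_meet[OF bnm bnz pbA])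
  moreover have "Dom C (m \<cdot> X.i2) = A" using mA by simp
  ultimately have "is_split_mono C (m \<cdot> X.i2)" using cs unfolding complete_star_def by blast
  then obtain \<alpha> where \<alpha>: "\<alpha> \<in> hom C Y A" "\<alpha> \<cdot> (m \<cdot> X.i2) = Idm C A"
    unfolding is_split_mono_def using mA by auto
  have \<alpha>A: "\<alpha> \<in> Ar C" "Dom C \<alpha> = Y" "Cod C \<alpha> = A" using \<alpha> by simp_all
  have \<alpha>m: "\<alpha> \<cdot> m = p2"
  proof (rule X.jointly_epic)
    show "\<alpha> \<cdot> m \<in> hom C P A" "p2 \<in> hom C P A" using \<alpha>A mA by simp_all
    have "(\<alpha> \<cdot> m) \<cdot> X.i1 \<in> hom C B A" using \<alpha>A mA by simp
    then show "(\<alpha> \<cdot> m) \<cdot> X.i1 = p2 \<cdot> X.i1" using hBA by simp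
    show "(\<alpha> \<cdot> m) \<cdot> X.i2 = p2 \<cdot> X.i2" using \<alpha>A mA \<alpha>(2) by simp
  qed
  obtain \<kappa> where ker: "is_kernel C \<kappa> \<alpha>" and bnk: "bourn_normal C \<kappa>" using kernel_normal[OF \<alpha>A(1)] by blast
  have pbB: "\<exists>iB. is_pullback C m \<kappa> X.i1 iB"
  proof -
    have kA0: "\<kappa> \<in> Ar C" "Cod C \<kappa> = Y" "\<alpha> \<cdot> \<kappa> = zr (Dom C \<kappa>) A"
      using kernel_props[OF ker] \<alpha>A by simp_all
    define K where "K = Dom C \<kappa>"
    have kA: "\<kappa> \<in> Ar C" "Dom C \<kappa> = K" "Cod C \<kappa> = Y" "\<alpha> \<cdot> \<kappa> = zr K A" using kA0 K_def by simp_all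
    have kmono: "is_mono C \<kappa>" by (rule kernel_mono[OF ker])
    have "\<alpha> \<cdot> m \<cdot> X.i1 = zr B A" using \<alpha>A mA by (simp add: eq_ext[OF \<alpha>m])
    then obtain iB where iB: "iB \<in> Ar C" "Dom C iB = B" "Cod C iB = K" "\<kappa> \<cdot> iB = m \<cdot> X.i1"
      using kernel_univ[OF ker, of "m \<cdot> X.i1"] mA \<alpha>A kA by auto
    have "is_pullback C m \<kappa> X.i1 iB"
    proof (rule pbI)
      fix a b assume ab0: "a \<in> Ar C" "b \<in> Ar C" "Dom C b = Dom C a" "Cod C a = Dom C m" "Cod C b = Dom C \<kappa>" "m \<cdot> a = \<kappa> \<cdot> b"
      define W where "W = Dom C a"
      have ab: "a \<in> Ar C" "b \<in> Ar C" "Dom C a = W" "Dom C b = W" "Cod C a = P" "Cod C b = K" using ab0 mA kA W_def by simp_all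
      have WO: "W \<in> Ob C" using ab by (metis dom_ob)
      have pa: "p2 \<cdot> a = zr W A"
      proof -
        have "p2 \<cdot> a = \<alpha> \<cdot> m \<cdot> a" using ab mA \<alpha>A by (simp add: eq_ext[OF \<alpha>m])
        also have "\<dots> = \<alpha> \<cdot> \<kappa> \<cdot> b" using ab0(6) by simp
        also have "\<dots> = zr W A" using ab kA \<alpha>A by (simp add: eq_ext[OF kA(4)])
        finally show ?thesis .
      qed
      have ia: "X.i1 \<cdot> p1 \<cdot> a = a" using X.i1p1[of a] ab pa by simp
      have hb: "iB \<cdot> p1 \<cdot> a = b"
      proof (rule mono_cancel[OF kmono])
        have "\<kappa> \<cdot> iB \<cdot> p1 \<cdot> a = m \<cdot> X.i1 \<cdot> p1 \<cdot> a" using iB kA ab mA by (simp add: eq_ext[OF iB(4)])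
        also have "\<dots> = m \<cdot> a" using ia by simp
        also have "\<dots> = \<kappa> \<cdot> b" by (rule ab0(6))
        finally show "\<kappa> \<cdot> iB \<cdot> p1 \<cdot> a = \<kappa> \<cdot> b" .
      qed (use iB ab kA in simp_all)
      show "\<exists>u. u \<in> Ar C \<and> Dom C u = Dom C a \<and> Cod C u = Dom C X.i1 \<and> X.i1 \<cdot> u = a \<and> iB \<cdot> u = b"
        using ia hb ab by (intro exI[of _ "p1 \<cdot> a"]) simp
    next
      fix u u' assume uu: "u \<in> Ar C" "u' \<in> Ar C" "Dom C u' = Dom C u" "Cod C u = Dom C X.i1" "Cod C u' = Dom C X.i1"
        "X.i1 \<cdot> u = X.i1 \<cdot> u'" "iB \<cdot> u = iB \<cdot> u'"
      have "p1 \<cdot> X.i1 \<cdot> u = p1 \<cdot> X.i1 \<cdot> u'" using uu(6) by simp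
      then show "u = u'" using uu(1-5) by (simp add: eq_ext[OF X.i1(4)])
    qed (use mA kA iB in simp_all)
    then show ?thesis by blast
  qed
  then obtain iB where pbB: "is_pullback C m \<kappa> X.i1 iB" by blast
  have "bourn_normal C (m \<cdot> X.i1)" by (rule bn_meet[OF bnm bnk pbB])
  then obtain \<beta> where \<beta>: "\<beta> \<in> hom C Y B" "\<beta> \<cdot> (m \<cdot> X.i1) = Idm C B"
    using sc_normal[OF sc, of "m \<cdot> X.i1"] mA by auto
  have \<beta>A: "\<beta> \<in> Ar C" "Dom C \<beta> = Y" "Cod C \<beta> = B" using \<beta> by simp_all
  have \<beta>m: "\<beta> \<cdot> m = p1"
    using X.sc_unique1[OF sc, of "\<beta> \<cdot> m"] \<beta>A mA \<beta>(2) by simp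
  define r where "r = X.pr \<beta> \<alpha>"
  have rA: "r \<in> Ar C" "Dom C r = Y" "Cod C r = P" "p1 \<cdot> r = \<beta>" "p2 \<cdot> r = \<alpha>"
    unfolding r_def using \<alpha>A \<beta>A by simp_all
  have "r \<cdot> m = Idm C P"
  proof (rule X.ext)
    show "p1 \<cdot> r \<cdot> m = p1 \<cdot> Idm C P" using rA mA \<beta>m by (simp add: eq_ext[OF rA(4)])
    show "p2 \<cdot> r \<cdot> m = p2 \<cdot> Idm C P" using rA mA \<alpha>m by (simp add: eq_ext[OF rA(5)])
  qed (use rA mA in simp_all)
  then show "is_split_mono C m" unfolding is_split_mono_def using rA mA by auto
qed

end

theorem proposition4p17:
  fixes C :: "('o, 'm) cat" and A B :: 'o
  assumes "protomodular C"
    and "\<forall>m. bourn_normal C m \<longrightarrow> (\<exists>z. is_centralizer C m z \<and> bourn_normal C z)"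
    and "abelian_obj C A" and "complete_star C A"
    and "strong_complete C B"
    and "hom C B A = {zero_mor C B A}"
  shows "\<forall>P p1 p2. is_product C B A P p1 p2 \<longrightarrow> complete_star C P"
proof (intro allI impI)
  fix P p1 p2 assume pr: "is_product C B A P p1 p2"
  have pcC: "pc C" using assms(1) by (rule pc.intro)
  show "complete_star C P" by (rule pc.main[OF pcC assms(2-6) pr])
qed

end
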